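(* The total number of Euclidean self-dual linear codes of length $n$ over $R$ is $$\Big(\sum_{k=0}^{\lfloor n/2\rfloor}\nu_{n,k}\,2^{k(k+1)/2}\Big)^2,$$ where $\nu_{n,k}$ is the number of binary $[n,k]$ linear codes that are Euclidean self-orthogonal and doubly-even (every codeword has Hamming weight divisible by $4$).
   Context: $R=\mathbb{Z}_4[v]/(v^2-v)$. A linear code of length $n$ over $R$ is an $R$-submodule $\mathcal{C}$ of $R^n$; it is Euclidean self-dual if $\mathcal{C}=\mathcal{C}^\perp$ where $\mathcal{C}^\perp=\{\mathbf{x}\in R^n:\sum_i x_ic_i=0\ \forall\mathbf{c}\in\mathcal{C}\}$. *)

theory Defs
  imports Main "HOL-Library.Numeral_Type" "HOL-Library.Product_Plus"
begin

text \<open>The ring R = Z4[v]/(v^2 - v): an element (a, b) :: 4 \<times> 4 stands for a + b v.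
  Addition and zero are componentwise (Product_Plus); multiplication uses v^2 = v.\<close>

type_synonym ring_R = "4 \<times> 4"

definition rmul :: "ring_R \<Rightarrow> ring_R \<Rightarrow> ring_R" where
  "rmul x y = (fst x * fst y, fst x * snd y + snd x * fst y + snd x * snd y)"

definition Rvecs :: "nat \<Rightarrow> (nat \<Rightarrow> ring_R) set" where
  "Rvecs n = {x. \<forall>i\<ge>n. x i = 0}"

definition Rip :: "nat \<Rightarrow> (nat \<Rightarrow> ring_R) \<Rightarrow> (nat \<Rightarrow> ring_R) \<Rightarrow> ring_R" where
  "Rip n x y = (\<Sum>i<n. rmul (x i) (y i))"

definition R_linear_code :: "nat \<Rightarrow> (nat \<Rightarrow> ring_R) set \<Rightarrow> bool" where
  "R_linear_code n C \<longleftrightarrow> C \<subseteq> Rvecs n \<and> (\<lambda>i. 0) \<in> C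
     \<and> (\<forall>x\<in>C. \<forall>y\<in>C. (\<lambda>i. x i + y i) \<in> C)
     \<and> (\<forall>r. \<forall>x\<in>C. (\<lambda>i. rmul r (x i)) \<in> C)"

definition R_dual :: "nat \<Rightarrow> (nat \<Rightarrow> ring_R) set \<Rightarrow> (nat \<Rightarrow> ring_R) set" where
  "R_dual n C = {x \<in> Rvecs n. \<forall>c\<in>C. Rip n x c = 0}"

definition R_self_dual_codes :: "nat \<Rightarrow> (nat \<Rightarrow> ring_R) set set" where
  "R_self_dual_codes n = {C. R_linear_code n C \<and> C = R_dual n C}"

definition Bvecs :: "nat \<Rightarrow> (nat \<Rightarrow> 2) set" where
  "Bvecs n = {x. \<forall>i\<ge>n. x i = 0}"

definition bin_linear_code :: "nat \<Rightarrow> (nat \<Rightarrow> 2) set \<Rightarrow> bool" where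
  "bin_linear_code n C \<longleftrightarrow> C \<subseteq> Bvecs n \<and> (\<lambda>i. 0) \<in> C
     \<and> (\<forall>x\<in>C. \<forall>y\<in>C. (\<lambda>i. x i + y i) \<in> C)"

definition bin_nk_code :: "nat \<Rightarrow> nat \<Rightarrow> (nat \<Rightarrow> 2) set \<Rightarrow> bool" where
  "bin_nk_code n k C \<longleftrightarrow> bin_linear_code n C \<and> card C = 2 ^ k"

definition bin_self_orthogonal :: "nat \<Rightarrow> (nat \<Rightarrow> 2) set \<Rightarrow> bool" where
  "bin_self_orthogonal n C \<longleftrightarrow> (\<forall>x\<in>C. \<forall>y\<in>C. (\<Sum>i<n. x i * y i) = 0)"

definition hamming_wt :: "nat \<Rightarrow> (nat \<Rightarrow> 2) \<Rightarrow> nat" where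
  "hamming_wt n x = card {i. i < n \<and> x i \<noteq> 0}"

definition doubly_even :: "nat \<Rightarrow> (nat \<Rightarrow> 2) set \<Rightarrow> bool" where
  "doubly_even n C \<longleftrightarrow> (\<forall>x\<in>C. 4 dvd hamming_wt n x)"

definition nu :: "nat \<Rightarrow> nat \<Rightarrow> nat" where
  "nu n k = card {C. bin_nk_code n k C \<and> bin_self_orthogonal n C \<and> doubly_even n C}"

end

theory Submission
  imports Defs "HOL-Library.Function_Algebras" "HOL-Library.FuncSet" "HOL-Computational_Algebra.Primes" Complex_Main
begin

definition gvecs :: "nat \<Rightarrow> (nat \<Rightarrow> 'a::zero) set" where
  "gvecs n = {x. \<forall>i\<ge>n. x i = 0}"

definition gdot :: "nat \<Rightarrow> (nat \<Rightarrow> 'a::comm_ring_1) \<Rightarrow> (nat \<Rightarrow> 'a) \<Rightarrow> 'a" where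
  "gdot n x y = (\<Sum>i<n. x i * y i)"

definition gdual :: "nat \<Rightarrow> (nat \<Rightarrow> 'a::comm_ring_1) set \<Rightarrow> (nat \<Rightarrow> 'a) set" where
  "gdual n X = {x \<in> gvecs n. \<forall>c\<in>X. gdot n x c = 0}"

lemma gvecs_bij:
  "bij_betw (\<lambda>x. restrict x {..<n}) (gvecs n :: (nat \<Rightarrow> 'a::zero) set) (PiE {..<n} (\<lambda>_. UNIV))"
proof (rule bij_betw_byWitness[where f' = "\<lambda>f i. if i < n then f i else 0"])
  show "\<forall>a\<in>gvecs n. (\<lambda>i. if i < n then restrict a {..<n} i else 0) = a"
    by (auto simp: gvecs_def fun_eq_iff)
  show "\<forall>a'\<in>PiE {..<n} (\<lambda>_. UNIV). restrict (\<lambda>i. if i < n then a' i else 0) {..<n} = (a' :: nat \<Rightarrow> 'a)"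
    by (auto simp: fun_eq_iff PiE_def extensional_def)
  show "(\<lambda>x. restrict x {..<n}) ` gvecs n \<subseteq> PiE {..<n} (\<lambda>_. UNIV)" by (intro image_subsetI) (simp only: restrict_PiE_iff, simp)
  show "(\<lambda>f i. if i < n then f i else 0) ` PiE {..<n} (\<lambda>_. UNIV) \<subseteq> (gvecs n :: (nat \<Rightarrow> 'a) set)"
    unfolding gvecs_def by (intro image_subsetI) simp
qed

lemma card_gvecs: "card (gvecs n :: (nat \<Rightarrow> 'a::{zero,finite}) set) = CARD('a) ^ n"
proof -
  have "card (gvecs n :: (nat \<Rightarrow> 'a) set) = card (PiE {..<n} (\<lambda>_. UNIV :: 'a set))"
    using bij_betw_same_card[OF gvecs_bij] .
  also have "\<dots> = CARD('a) ^ n" by (simp add: card_PiE)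
  finally show ?thesis .
qed

lemma finite_gvecs: "finite (gvecs n :: (nat \<Rightarrow> 'a::{zero,finite}) set)"
proof -
  have "finite (PiE {..<n} (\<lambda>_. UNIV :: 'a set))" by (simp add: finite_PiE)
  then show ?thesis using bij_betw_finite[OF gvecs_bij] by blast
qed

lemma char_sum_zero:
  fixes G :: "'b::ab_group_add set" and f :: "'b \<Rightarrow> complex"
  assumes fin: "finite G" and cl: "\<And>x y. x \<in> G \<Longrightarrow> y \<in> G \<Longrightarrow> x + y \<in> G"
    and hom: "\<And>x y. x \<in> G \<Longrightarrow> y \<in> G \<Longrightarrow> f (x + y) = f x * f y"
    and g0: "g0 \<in> G" and ne: "f g0 \<noteq> 1"
  shows "sum f G = 0"
proof -
  let ?h = "\<lambda>x. x + g0"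
  have inj: "inj_on ?h G" by (auto simp: inj_on_def)
  have sub: "?h ` G \<subseteq> G" using cl g0 by auto
  have eq: "?h ` G = G"
    using card_subset_eq[OF fin sub] card_image[OF inj] by simp
  have "sum f G = sum f (?h ` G)" using eq by simp
  also have "\<dots> = sum (\<lambda>x. f (x + g0)) G" using sum.reindex[OF inj] by simp
  also have "\<dots> = sum (\<lambda>x. f x * f g0) G" using hom g0 by (intro sum.cong) auto
  also have "\<dots> = f g0 * sum f G" by (simp add: sum_distrib_left mult.commute)
  finally have "(1 - f g0) * sum f G = 0" by (simp add: algebra_simps)
  then show ?thesis using ne by simp
qed

lemma gdot_add_right: "gdot n x (y + z) = gdot n x y + gdot n x z"
  unfolding gdot_def plus_fun_def by (simp add: distrib_left sum.distrib)

lemma gdot_add_left: "gdot n (y + z) x = gdot n y x + gdot n z x"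
  unfolding gdot_def plus_fun_def by (simp add: distrib_right sum.distrib)

lemma gdot_comm: "gdot n x y = gdot n y x"
  by (simp add: gdot_def mult.commute)

lemma char_card:
  fixes X :: "(nat \<Rightarrow> 'a::{comm_ring_1,finite}) set" and \<psi> :: "'a \<Rightarrow> complex"
  assumes hom: "\<And>a b. \<psi> (a + b) = \<psi> a * \<psi> b" and psi0: "\<psi> 0 = 1"
    and inj1: "\<And>a. \<psi> a = 1 \<Longrightarrow> a = 0"
    and sub: "X \<subseteq> gvecs n" and z: "0 \<in> X" and cl: "\<And>x y. x \<in> X \<Longrightarrow> y \<in> X \<Longrightarrow> x + y \<in> X"
  shows "card X * card (gdual n X) = CARD('a) ^ n"
proof -
  let ?V = "gvecs n :: (nat \<Rightarrow> 'a) set"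
  have finV: "finite ?V" by (rule finite_gvecs)
  have finX: "finite X" using finite_subset[OF sub finV] .
  have clV: "\<And>x y. x \<in> ?V \<Longrightarrow> y \<in> ?V \<Longrightarrow> x + y \<in> ?V" by (auto simp: gvecs_def)
  define S where "S = (\<Sum>x\<in>?V. \<Sum>c\<in>X. \<psi> (gdot n x c))"
  have inner1: "(\<Sum>c\<in>X. \<psi> (gdot n x c)) = (if x \<in> gdual n X then of_nat (card X) else 0)"
    if xV: "x \<in> ?V" for x
  proof (cases "x \<in> gdual n X")
    case True
    then show ?thesis by (simp add: gdual_def psi0)
  next
    case False
    then obtain c0 where c0: "c0 \<in> X" "gdot n x c0 \<noteq> 0" using xV by (auto simp: gdual_def)
    have "(\<Sum>c\<in>X. \<psi> (gdot n x c)) = 0"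
    proof (rule char_sum_zero[OF finX cl _ c0(1)])
      show "\<psi> (gdot n x c0) \<noteq> 1" using c0(2) inj1 by blast
      show "\<psi> (gdot n x (a + b)) = \<psi> (gdot n x a) * \<psi> (gdot n x b)" for a b
        by (simp only: gdot_add_right hom)
    qed
    then show ?thesis using False by simp
  qed
  have "S = (\<Sum>x\<in>?V. if x \<in> gdual n X then of_nat (card X) else 0)"
    unfolding S_def using inner1 by (intro sum.cong) auto
  also have "\<dots> = of_nat (card X) * of_nat (card (gdual n X))"
  proof -
    have "gdual n X \<subseteq> ?V" by (auto simp: gdual_def)
    then have "?V \<inter> {x. x \<in> gdual n X} = gdual n X" by auto
    then show ?thesis by (simp add: sum.If_cases[OF finV] mult.commute)
  qed
  finally have S1: "S = of_nat (card X * card (gdual n X))" by simp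
  have inner2: "(\<Sum>x\<in>?V. \<psi> (gdot n x c)) = (if c = 0 then of_nat (card ?V) else 0)"
    if cX: "c \<in> X" for c
  proof (cases "c = 0")
    case True
    then show ?thesis by (simp add: gdot_def psi0)
  next
    case False
    then obtain j where j: "c j \<noteq> 0" by (auto simp: fun_eq_iff)
    have "c \<in> gvecs n" using cX sub by auto
    then have "j < n" using j by (metis (mono_tags) gvecs_def mem_Collect_eq not_le)
    define x0 where "x0 = (\<lambda>i. if i = j then (1::'a) else 0)"
    have x0V: "x0 \<in> ?V" using \<open>j < n\<close> by (auto simp: gvecs_def x0_def)
    have "(\<lambda>i. x0 i * c i) = (\<lambda>i. if i = j then c j else 0)" by (auto simp: x0_def)
    have "gdot n x0 c = (\<Sum>i<n. if i = j then c j else 0)" unfolding gdot_def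
      by (rule sum.cong) (auto simp: x0_def)
    then have "gdot n x0 c = c j" using \<open>j < n\<close> by simp
    then have "\<psi> (gdot n x0 c) \<noteq> 1" using j inj1 by auto
    have "(\<Sum>x\<in>?V. \<psi> (gdot n x c)) = 0"
    proof (rule char_sum_zero[OF finV clV _ x0V])
      show "\<psi> (gdot n (a + b) c) = \<psi> (gdot n a c) * \<psi> (gdot n b c)" for a b
        by (simp only: gdot_add_left hom)
    qed (simp_all add: \<open>\<psi> (gdot n x0 c) \<noteq> 1\<close>)
    then show ?thesis using False by simp
  qed
  have "S = (\<Sum>c\<in>X. \<Sum>x\<in>?V. \<psi> (gdot n x c))" unfolding S_def by (rule sum.swap)
  also have "\<dots> = (\<Sum>c\<in>X. if c = 0 then of_nat (card ?V) else 0)"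
    using inner2 by (intro sum.cong) auto
  also have "\<dots> = of_nat (card ?V)" using z finX by (simp add: sum.delta)
  finally have S2: "S = of_nat (card ?V)" .
  have "(of_nat (card X * card (gdual n X)) :: complex) = of_nat (card ?V)"
    using trans[OF S1[symmetric] S2] .
  then have "card X * card (gdual n X) = card ?V" using of_nat_eq_iff by blast
  then show ?thesis by (simp add: card_gvecs)
qed


lemma ex4: "(x::4) = 0 \<or> x = 1 \<or> x = 2 \<or> x = 3"
proof (cases x)
  case (of_int z)
  then have "z = 0 \<or> z = 1 \<or> z = 2 \<or> z = 3" by auto
  then show ?thesis using of_int by auto
qed

lemma ex2: "(x::2) = 0 \<or> x = 1"
proof (cases x)
  case (of_int z)
  then have "z = 0 \<or> z = 1" by auto
  then show ?thesis using of_int by auto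
qed

definition md :: "4 \<Rightarrow> 2" where "md a = (if a = 1 \<or> a = 3 then 1 else 0)"
definition L :: "2 \<Rightarrow> 4" where "L b = (if b = 1 then 1 else 0)"
definition hf :: "4 \<Rightarrow> 2" where "hf a = (if a = 2 \<or> a = 3 then 1 else 0)"
definition tw :: "2 \<Rightarrow> 4" where "tw b = 2 * L b"

lemma md_0[simp]: "md 0 = 0" and L_0[simp]: "L 0 = 0" and hf_0[simp]: "hf 0 = 0" and tw_0[simp]: "tw 0 = 0"
  by (simp_all add: md_def L_def hf_def tw_def)

lemma md_add: "md (a + b) = md a + md b"
  using ex4[of a] ex4[of b] by (auto simp: md_def)
lemma md_mult: "md (a * b) = md a * md b"
  using ex4[of a] ex4[of b] by (auto simp: md_def)
lemma md_minus: "md (a - b) = md a + md b"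
  using ex4[of a] ex4[of b] by (auto simp: md_def)
lemma md_L[simp]: "md (L b) = b"
  using ex2[of b] by (auto simp: md_def L_def)
lemma md_tw[simp]: "md (tw b) = 0"
  using ex2[of b] by (auto simp: md_def L_def tw_def)
lemma tw_add: "tw (a + b) = tw a + tw b"
  using ex2[of a] ex2[of b] by (auto simp: L_def tw_def)
lemma tw_mult: "tw b * a = tw (b * md a)"
  using ex4[of a] ex2[of b] by (auto simp: md_def L_def tw_def)
lemma tw_eq0[simp]: "tw b = 0 \<longleftrightarrow> b = 0"
  using ex2[of b] by (auto simp: L_def tw_def)
lemma tw_inj: "tw a = tw b \<longleftrightarrow> a = b"
  using ex2[of a] ex2[of b] by (auto simp: L_def tw_def)
lemma decomp4: "a = L (md a) + tw (hf a)"
  using ex4[of a] by (auto simp: md_def L_def hf_def tw_def)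
lemma md0_tw: "md a = 0 \<Longrightarrow> a = tw (hf a)"
  using ex4[of a] by (auto simp: md_def L_def hf_def tw_def)
lemma sq4: "a * a = L (md a)"
  using ex4[of a] by (auto simp: md_def L_def)
lemma two_mult: "2 * a = tw (md a)"
  using ex4[of a] by (auto simp: md_def L_def tw_def)
lemma md_add_tw: "md (a + tw b) = md a"
  by (simp add: md_add)
lemma md_even_mult: "md j = 0 \<Longrightarrow> j * a = tw (hf j * md a)"
  using ex4[of a] ex4[of j] by (auto simp: md_def L_def hf_def tw_def)
lemma md_eq0_iff: "md a = 0 \<longleftrightarrow> a = 0 \<or> a = 2"
  using ex4[of a] by (auto simp: md_def)
lemma ex2_ne0: "(b::2) \<noteq> 0 \<longleftrightarrow> b = 1"
  using ex2[of b] by auto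

lemma two2[simp]: "(2::2) = 0" by simp
lemma four4[simp]: "(4::4) = 0" by simp
lemma add_self2: "(a::2) + a = 0"
  using ex2[of a] by auto
lemma add_self2v: "(x::nat \<Rightarrow> 2) + x = 0"
  by (simp add: fun_eq_iff)

lemma md_sum: "md (sum f A) = (\<Sum>a\<in>A. md (f a))"
  by (induction A rule: infinite_finite_induct) (simp_all add: md_add)
lemma tw_sum: "tw (sum f A) = (\<Sum>a\<in>A. tw (f a))"
  by (induction A rule: infinite_finite_induct) (simp_all add: tw_add)

definition mdv :: "(nat \<Rightarrow> 4) \<Rightarrow> (nat \<Rightarrow> 2)" where "mdv x = (\<lambda>i. md (x i))"
definition twv :: "(nat \<Rightarrow> 2) \<Rightarrow> (nat \<Rightarrow> 4)" where "twv y = (\<lambda>i. tw (y i))"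
definition hfv :: "(nat \<Rightarrow> 4) \<Rightarrow> (nat \<Rightarrow> 2)" where "hfv x = (\<lambda>i. hf (x i))"
definition Lv :: "(nat \<Rightarrow> 2) \<Rightarrow> (nat \<Rightarrow> 4)" where "Lv y = (\<lambda>i. L (y i))"
definition smul :: "'a::times \<Rightarrow> (nat \<Rightarrow> 'a) \<Rightarrow> (nat \<Rightarrow> 'a)" where "smul r x = (\<lambda>i. r * x i)"

lemma mdv_add: "mdv (x + y) = mdv x + mdv y"
  by (simp add: mdv_def fun_eq_iff md_add)
lemma mdv_minus: "mdv (x - y) = mdv x + mdv y"
  by (simp add: mdv_def fun_eq_iff md_minus)
lemma twv_add: "twv (x + y) = twv x + twv y"
  by (simp add: twv_def fun_eq_iff tw_add)
lemma mdv_twv[simp]: "mdv (twv y) = 0"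
  by (simp add: mdv_def twv_def fun_eq_iff)
lemma mdv_0[simp]: "mdv 0 = 0" and twv_0[simp]: "twv 0 = 0"
  by (simp_all add: mdv_def twv_def fun_eq_iff)
lemma twv_inj: "twv a = twv b \<longleftrightarrow> a = b"
  by (simp add: twv_def fun_eq_iff tw_inj)
lemma mdv_Lv[simp]: "mdv (Lv y) = y"
  by (simp add: mdv_def Lv_def)
lemma mdv0_twv: "mdv x = 0 \<Longrightarrow> x = twv (hfv x)"
  by (auto simp: mdv_def twv_def hfv_def fun_eq_iff intro: md0_tw)
lemma smul2: "smul 2 x = twv (mdv x)"
  by (simp add: smul_def twv_def mdv_def two_mult)
lemma decompv: "x = Lv (mdv x) + twv (hfv x)"
  by (simp add: Lv_def mdv_def twv_def hfv_def plus_fun_def fun_eq_iff decomp4[symmetric])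

lemma gvecs_mdv: "x \<in> gvecs n \<Longrightarrow> mdv x \<in> gvecs n"
  by (simp add: gvecs_def mdv_def)
lemma gvecs_twv: "y \<in> gvecs n \<Longrightarrow> twv y \<in> gvecs n"
  by (simp add: gvecs_def twv_def)
lemma gvecs_hfv: "x \<in> gvecs n \<Longrightarrow> hfv x \<in> gvecs n"
  by (simp add: gvecs_def hfv_def)
lemma gvecs_Lv: "y \<in> gvecs n \<Longrightarrow> Lv y \<in> gvecs n"
  by (simp add: gvecs_def Lv_def)
lemma gvecs_add: "(x::nat\<Rightarrow>'a::monoid_add) \<in> gvecs n \<Longrightarrow> y \<in> gvecs n \<Longrightarrow> x + y \<in> gvecs n"
  by (simp add: gvecs_def)
lemma gvecs_minus: "(x::nat\<Rightarrow>'a::group_add) \<in> gvecs n \<Longrightarrow> y \<in> gvecs n \<Longrightarrow> x - y \<in> gvecs n"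
  by (simp add: gvecs_def)
lemma gvecs_smul: "(x::nat\<Rightarrow>'a::mult_zero) \<in> gvecs n \<Longrightarrow> smul r x \<in> gvecs n"
  by (simp add: gvecs_def smul_def)
lemma gvecs_0: "0 \<in> gvecs n"
  by (simp add: gvecs_def)

lemma gdot_twv: "gdot n (twv y) c = tw (gdot n y (mdv c))"
  by (simp add: gdot_def twv_def mdv_def tw_sum tw_mult)
lemma md_gdot: "md (gdot n x y) = gdot n (mdv x) (mdv y)"
  by (simp add: gdot_def mdv_def md_sum md_mult)
lemma gdot_smul: "gdot n (smul r x) y = r * gdot n x y"
  by (simp add: gdot_def smul_def sum_distrib_left mult.assoc)
lemma gdot_minus_left: "gdot n (x - y) z = gdot n x z - gdot n y z"
  by (simp add: gdot_def fun_diff_def left_diff_distrib sum_subtractf)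

definition hamm :: "nat \<Rightarrow> (nat \<Rightarrow> 2) \<Rightarrow> nat" where
  "hamm n x = card {i. i < n \<and> x i \<noteq> 0}"

lemma gdot_self: "gdot n c c = of_nat (card {i. i < n \<and> mdv c i \<noteq> 0})"
proof -
  have "gdot n c c = (\<Sum>i<n. if mdv c i \<noteq> 0 then 1 else 0)"
    unfolding gdot_def by (rule sum.cong) (auto simp: sq4 mdv_def L_def ex2_ne0)
  also have "\<dots> = (\<Sum>i\<in>{i\<in>{..<n}. mdv c i \<noteq> 0}. 1)"
    by (rule sum.inter_filter[symmetric]) simp
  also have "\<dots> = of_nat (card {i\<in>{..<n}. mdv c i \<noteq> 0})" by simp
  finally have e: "gdot n c c = of_nat (card {i\<in>{..<n}. mdv c i \<noteq> 0})" .
  have "{i\<in>{..<n}. mdv c i \<noteq> 0} = {i. i < n \<and> mdv c i \<noteq> 0}" by auto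
  then show ?thesis using e by simp
qed

lemma of_nat4_0: "(of_nat m :: 4) = 0 \<longleftrightarrow> 4 dvd m"
  by (simp add: of_nat_eq_0_iff_char_dvd)

definition \<psi>2 :: "2 \<Rightarrow> complex" where "\<psi>2 b = (if b = 0 then 1 else -1)"
definition \<psi>4 :: "4 \<Rightarrow> complex" where
  "\<psi>4 a = (if a = 0 then 1 else if a = 1 then \<i> else if a = 2 then -1 else -\<i>)"

lemma \<psi>2_hom: "\<psi>2 (a + b) = \<psi>2 a * \<psi>2 b"
  using ex2[of a] ex2[of b] by (auto simp: \<psi>2_def)
lemma \<psi>4_hom: "\<psi>4 (a + b) = \<psi>4 a * \<psi>4 b"
  using ex4[of a] ex4[of b] by (auto simp: \<psi>4_def)
lemma \<psi>2_1: "\<psi>2 a = 1 \<Longrightarrow> a = 0"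
  by (auto simp: \<psi>2_def split: if_splits)
lemma \<psi>4_1: "\<psi>4 a = 1 \<Longrightarrow> a = 0"
  using ex4[of a] by (auto simp: \<psi>4_def complex_eq_iff)

definition Zcode :: "nat \<Rightarrow> (nat \<Rightarrow> 4) set \<Rightarrow> bool" where
  "Zcode n C \<longleftrightarrow> C \<subseteq> gvecs n \<and> 0 \<in> C \<and> (\<forall>x\<in>C. \<forall>y\<in>C. x + y \<in> C) \<and> (\<forall>r. \<forall>x\<in>C. smul r x \<in> C)"

definition Bcode :: "nat \<Rightarrow> (nat \<Rightarrow> 2) set \<Rightarrow> bool" where
  "Bcode n D \<longleftrightarrow> D \<subseteq> gvecs n \<and> 0 \<in> D \<and> (\<forall>x\<in>D. \<forall>y\<in>D. x + y \<in> D)"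

definition SD :: "nat \<Rightarrow> (nat \<Rightarrow> 4) set set" where
  "SD n = {C. Zcode n C \<and> C = gdual n C}"

definition res :: "(nat \<Rightarrow> 4) set \<Rightarrow> (nat \<Rightarrow> 2) set" where "res C = mdv ` C"
definition tor :: "nat \<Rightarrow> (nat \<Rightarrow> 4) set \<Rightarrow> (nat \<Rightarrow> 2) set" where
  "tor n C = {y \<in> gvecs n. twv y \<in> C}"

lemma card_dual2: assumes "Bcode n D" shows "card D * card (gdual n D) = 2 ^ n"
proof -
  have "card D * card (gdual n D) = CARD(2) ^ n"
  proof (rule char_card[where \<psi>=\<psi>2])
    show "\<psi>2 (a + b) = \<psi>2 a * \<psi>2 b" for a b by (rule \<psi>2_hom)
    show "\<psi>2 0 = 1" by (simp add: \<psi>2_def)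
    show "\<psi>2 a = 1 \<Longrightarrow> a = 0" for a by (rule \<psi>2_1)
  qed (use assms in \<open>auto simp: Bcode_def\<close>)
  then show ?thesis by simp
qed

lemma card_dual4: assumes "Zcode n C" shows "card C * card (gdual n C) = 4 ^ n"
proof -
  have "card C * card (gdual n C) = CARD(4) ^ n"
  proof (rule char_card[where \<psi>=\<psi>4])
    show "\<psi>4 (a + b) = \<psi>4 a * \<psi>4 b" for a b by (rule \<psi>4_hom)
    show "\<psi>4 0 = 1" by (simp add: \<psi>4_def)
    show "\<psi>4 a = 1 \<Longrightarrow> a = 0" for a by (rule \<psi>4_1)
  qed (use assms in \<open>auto simp: Zcode_def\<close>)
  then show ?thesis by simp
qed

lemma finite_Zcode: "Zcode n C \<Longrightarrow> finite C"
  using finite_subset finite_gvecs unfolding Zcode_def by blast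
lemma finite_Bcode: "Bcode n C \<Longrightarrow> finite C"
  using finite_subset finite_gvecs unfolding Bcode_def by blast
lemma finite_gdual: "finite (gdual n X :: (nat \<Rightarrow> 'a::{comm_ring_1,finite}) set)"
proof -
  have "gdual n X \<subseteq> gvecs n" unfolding gdual_def by (rule Collect_subset)
  then show ?thesis using finite_subset finite_gvecs by blast
qed

lemma minus4: "(a::4) - b = a + 3 * b"
  using ex4[of a] ex4[of b] by auto

lemma Zcode_minus: "Zcode n C \<Longrightarrow> x \<in> C \<Longrightarrow> y \<in> C \<Longrightarrow> x - y \<in> C"
proof -
  assume C: "Zcode n C" "x \<in> C" "y \<in> C"
  have e: "x - y = x + smul 3 y"
    unfolding smul_def fun_eq_iff plus_fun_def fun_diff_def by (simp only: minus4 simp_thms)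
  have "smul 3 y \<in> C" using C unfolding Zcode_def by blast
  then have "x + smul 3 y \<in> C" using C unfolding Zcode_def by blast
  then show ?thesis unfolding e .
qed

lemma Zcode_twv_mdv: "Zcode n C \<Longrightarrow> c \<in> C \<Longrightarrow> twv (mdv c) \<in> C"
  unfolding smul2[of c, symmetric] Zcode_def by blast

lemma Bcode_res: assumes C: "Zcode n C" shows "Bcode n (res C)"
proof -
  have s: "C \<subseteq> gvecs n" and z: "0 \<in> C" and a: "\<And>x y. x \<in> C \<Longrightarrow> y \<in> C \<Longrightarrow> x + y \<in> C"
    using C unfolding Zcode_def by auto
  have "res C \<subseteq> gvecs n" using s gvecs_mdv unfolding res_def by blast
  moreover have "0 \<in> res C" using z mdv_0 unfolding res_def by (metis image_eqI)
  moreover have "x + y \<in> res C" if xy: "x \<in> res C" "y \<in> res C" for x y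
  proof -
    obtain cx cy where "cx \<in> C" "cy \<in> C" "x = mdv cx" "y = mdv cy" using xy unfolding res_def by blast
    then show ?thesis using a[of cx cy] mdv_add[of cx cy] unfolding res_def by (metis image_eqI)
  qed
  ultimately show ?thesis unfolding Bcode_def by blast
qed

lemma Bcode_tor: assumes C: "Zcode n C" shows "Bcode n (tor n C)"
proof -
  have z: "0 \<in> C" and a: "\<And>x y. x \<in> C \<Longrightarrow> y \<in> C \<Longrightarrow> x + y \<in> C"
    using C unfolding Zcode_def by auto
  have "tor n C \<subseteq> gvecs n" unfolding tor_def by blast
  moreover have "0 \<in> tor n C" using z gvecs_0 unfolding tor_def by simp
  moreover have "x + y \<in> tor n C" if "x \<in> tor n C" "y \<in> tor n C" for x y
    using that a[of "twv x" "twv y"] gvecs_add[of x n y] unfolding tor_def by (simp add: twv_add)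
  ultimately show ?thesis unfolding Bcode_def by blast
qed

lemma res_sub_tor: assumes C: "Zcode n C" shows "res C \<subseteq> tor n C"
proof
  fix d assume "d \<in> res C"
  then obtain c where c: "c \<in> C" "d = mdv c" unfolding res_def by blast
  have "c \<in> gvecs n" using c C unfolding Zcode_def by blast
  then show "d \<in> tor n C" using c Zcode_twv_mdv[OF C c(1)] gvecs_mdv unfolding tor_def by blast
qed

lemma fib_card:
  assumes C: "Zcode n C" and c0: "c0 \<in> C"
  shows "card {c\<in>C. mdv c = mdv c0} = card (tor n C)"
proof -
  have a: "\<And>x y. x \<in> C \<Longrightarrow> y \<in> C \<Longrightarrow> x + y \<in> C"
    using C unfolding Zcode_def by auto
  have "bij_betw (\<lambda>t. c0 + twv t) (tor n C) {c\<in>C. mdv c = mdv c0}"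
  proof (rule bij_betw_imageI)
    show "inj_on (\<lambda>t. c0 + twv t) (tor n C)"
      unfolding inj_on_def by (simp add: twv_inj)
    show "(\<lambda>t. c0 + twv t) ` tor n C = {c \<in> C. mdv c = mdv c0}"
    proof
      show "(\<lambda>t. c0 + twv t) ` tor n C \<subseteq> {c \<in> C. mdv c = mdv c0}"
      proof
        fix x assume "x \<in> (\<lambda>t. c0 + twv t) ` tor n C"
        then obtain t where t: "t \<in> tor n C" "x = c0 + twv t" by blast
        have "twv t \<in> C" using t unfolding tor_def by blast
        then have "x \<in> C" using a[OF c0] t by blast
        moreover have "mdv x = mdv c0" using t by (simp add: mdv_add)
        ultimately show "x \<in> {c \<in> C. mdv c = mdv c0}" by blast
      qed
      show "{c \<in> C. mdv c = mdv c0} \<subseteq> (\<lambda>t. c0 + twv t) ` tor n C"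
      proof
        fix c assume c: "c \<in> {c \<in> C. mdv c = mdv c0}"
        have "mdv (c - c0) = mdv c0 + mdv c0" using c by (simp only: mdv_minus mem_Collect_eq)
        then have "mdv (c - c0) = 0" by (simp only: add_self2v)
        then have e: "c - c0 = twv (hfv (c - c0))" by (rule mdv0_twv)
        have cm: "c - c0 \<in> C" using Zcode_minus[OF C] c c0 by blast
        have "c - c0 \<in> gvecs n" using cm C unfolding Zcode_def by blast
        then have "hfv (c - c0) \<in> gvecs n" by (rule gvecs_hfv)
        then have "hfv (c - c0) \<in> tor n C"
          using cm e unfolding tor_def by simp
        moreover have "c = c0 + twv (hfv (c - c0))" using e by (metis add.commute diff_add_cancel)
        ultimately show "c \<in> (\<lambda>t. c0 + twv t) ` tor n C" by blast
      qed
    qed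
  qed
  then show ?thesis by (simp add: bij_betw_same_card)
qed

lemma card_res_tor:
  assumes C: "Zcode n C"
  shows "card C = card (res C) * card (tor n C)"
proof -
  have finC: "finite C" using finite_Zcode[OF C] .
  have "C = (\<Union>d\<in>res C. {c\<in>C. mdv c = d})" by (auto simp: res_def)
  then have "card C = card (\<Union>d\<in>res C. {c\<in>C. mdv c = d})" by simp
  also have "\<dots> = (\<Sum>d\<in>res C. card {c\<in>C. mdv c = d})"
    by (rule card_UN_disjoint) (use finC in \<open>auto simp: res_def\<close>)
  also have "\<dots> = (\<Sum>d\<in>res C. card (tor n C))"
  proof (rule sum.cong)
    fix d assume "d \<in> res C"
    then obtain c0 where "c0 \<in> C" "d = mdv c0" by (auto simp: res_def)
    then show "card {c\<in>C. mdv c = d} = card (tor n C)" using fib_card[OF C] by simp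
  qed simp
  finally show ?thesis by simp
qed


lemma four_pow: "(4::nat) ^ n = 2 ^ n * 2 ^ n"
proof -
  have "(4::nat) ^ n = (2 * 2) ^ n" by simp
  also have "\<dots> = 2 ^ n * 2 ^ n" by (rule power_mult_distrib)
  finally show ?thesis .
qed

lemma gdot_twv_right: "gdot n c (twv y) = tw (gdot n y (mdv c))"
  using gdot_twv[of n y c] gdot_comm[of n c "twv y"] by simp

lemma so_tor:
  assumes C: "Zcode n C" and so: "C \<subseteq> gdual n C"
  shows "tor n C \<subseteq> gdual n (res C)"
proof
  fix y assume y: "y \<in> tor n C"
  then have yv: "y \<in> gvecs n" and yc: "twv y \<in> C" unfolding tor_def by auto
  have "gdot n y d = 0" if d: "d \<in> res C" for d
  proof -
    obtain c where c: "c \<in> C" "d = mdv c" using d unfolding res_def by blast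
    have "gdot n (twv y) c = 0" using so yc c(1) unfolding gdual_def by blast
    then have "tw (gdot n y (mdv c)) = 0" by (simp only: gdot_twv)
    then show ?thesis using c(2) by simp
  qed
  then show "y \<in> gdual n (res C)" using yv unfolding gdual_def by blast
qed

lemma so_res:
  assumes C: "Zcode n C" and so: "C \<subseteq> gdual n C"
  shows "res C \<subseteq> gdual n (res C)"
  using so_tor[OF C so] res_sub_tor[OF C] by blast

lemma so_de:
  assumes C: "Zcode n C" and so: "C \<subseteq> gdual n C" and d: "d \<in> res C"
  shows "4 dvd hamm n d"
proof -
  obtain c where c: "c \<in> C" "d = mdv c" using d unfolding res_def by blast
  have "gdot n c c = 0" using so c(1) unfolding gdual_def by blast
  then have "(of_nat (card {i. i < n \<and> mdv c i \<noteq> 0}) :: 4) = 0" by (simp only: gdot_self)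
  then show ?thesis using c(2) unfolding hamm_def of_nat4_0 by simp
qed

lemma so_card:
  assumes C: "Zcode n C" and so: "C \<subseteq> gdual n C"
  shows "card C \<le> 2 ^ n"
proof -
  have "card C \<le> card (gdual n C)" by (rule card_mono[OF finite_gdual so])
  then have "card C * card C \<le> card C * card (gdual n C)" by simp
  also have "\<dots> = 2 ^ n * 2 ^ n" using card_dual4[OF C] four_pow by simp
  finally have "(card C)^2 \<le> (2^n)^2" by (simp add: power2_eq_square)
  then show ?thesis by (rule power2_le_imp_le) simp
qed

lemma SD_from:
  assumes C: "Zcode n C" and so: "C \<subseteq> gdual n C" and ge: "2 ^ n \<le> card C"
  shows "C \<in> SD n" "card C = 2 ^ n"
proof -
  show cC: "card C = 2 ^ n" using so_card[OF C so] ge by simp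
  have "2 ^ n * card (gdual n C) = 2 ^ n * 2 ^ n" using card_dual4[OF C] four_pow cC by simp
  then have "card (gdual n C) = 2 ^ n" by simp
  then have "C = gdual n C" using card_subset_eq[OF finite_gdual so] cC by simp
  then show "C \<in> SD n" using C unfolding SD_def by blast
qed

lemma SD_Zcode: "C \<in> SD n \<Longrightarrow> Zcode n C"
  unfolding SD_def by blast
lemma SD_so: "C \<in> SD n \<Longrightarrow> C \<subseteq> gdual n C"
  unfolding SD_def by blast

lemma SD_card:
  assumes "C \<in> SD n" shows "card C = 2 ^ n"
proof -
  have C: "Zcode n C" and e: "C = gdual n C" using assms unfolding SD_def by auto
  have "card C * card C = 2 ^ n * 2 ^ n" using card_dual4[OF C] four_pow e by simp
  then have "(card C)^2 = (2^n)^2" by (simp add: power2_eq_square)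
  then show ?thesis by (rule power2_eq_imp_eq) simp_all
qed

lemma SD_tor:
  assumes "C \<in> SD n" shows "tor n C = gdual n (res C)"
proof
  have C: "Zcode n C" and e: "C = gdual n C" using assms unfolding SD_def by auto
  show "tor n C \<subseteq> gdual n (res C)" using so_tor[OF C] e by blast
  show "gdual n (res C) \<subseteq> tor n C"
  proof
    fix y assume y: "y \<in> gdual n (res C)"
    then have yv: "y \<in> gvecs n" unfolding gdual_def by blast
    have "gdot n (twv y) c = 0" if c: "c \<in> C" for c
    proof -
      have "mdv c \<in> res C" using c unfolding res_def by blast
      then have "gdot n y (mdv c) = 0" using y unfolding gdual_def by blast
      then show ?thesis by (simp only: gdot_twv tw_0)
    qed
    then have "twv y \<in> gdual n C" using gvecs_twv[OF yv] unfolding gdual_def by blast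
    then show "y \<in> tor n C" using e yv unfolding tor_def by blast
  qed
qed

lemma SD_res_card:
  assumes "C \<in> SD n"
  shows "\<exists>k. card (res C) = 2 ^ k \<and> k \<le> n div 2"
proof -
  have C: "Zcode n C" using assms by (rule SD_Zcode)
  have "card (res C) * card (tor n C) = 2 ^ n"
    using card_res_tor[OF C] SD_card[OF assms] by simp
  then obtain i j where ij: "card (res C) = 2 ^ i" "card (tor n C) = 2 ^ j"
    using prime_power_mult_nat[OF two_is_prime_nat] by blast
  have "i + j = n" using \<open>card (res C) * card (tor n C) = 2 ^ n\<close> ij
    by (simp add: power_add[symmetric])
  have "card (res C) \<le> card (tor n C)"
    using card_mono[OF finite_Bcode[OF Bcode_tor[OF C]] res_sub_tor[OF C]] .
  then have "(2::nat) ^ i \<le> 2 ^ j" using ij by simp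
  then have "i \<le> j" by simp
  then have "i \<le> n div 2" using \<open>i + j = n\<close> by simp
  then show ?thesis using ij by blast
qed


lemma gdot_0_left[simp]: "gdot n 0 x = 0" by (simp add: gdot_def)
lemma gdot_0_right[simp]: "gdot n x 0 = 0" by (simp add: gdot_def)

lemma Bcode_gdual: "Bcode n (gdual n (D :: (nat \<Rightarrow> 2) set))"
  unfolding Bcode_def
proof (intro conjI ballI)
  show "gdual n D \<subseteq> gvecs n" unfolding gdual_def by blast
  show "0 \<in> gdual n D" unfolding gdual_def using gvecs_0 by simp
  fix x y assume "x \<in> gdual n D" "y \<in> gdual n D"
  then show "x + y \<in> gdual n D" unfolding gdual_def using gvecs_add by (auto simp: gdot_add_left)
qed

lemma smul2_0[simp]: "smul (0::2) x = 0" by (simp add: smul_def fun_eq_iff)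
lemma smul2_1[simp]: "smul (1::2) x = x" by (simp add: smul_def)

lemma Bcode_smul: assumes "Bcode n D" "x \<in> D" shows "smul (b::2) x \<in> D"
  using ex2[of b] assms unfolding Bcode_def by auto

lemma gdual_anti: "A \<subseteq> B \<Longrightarrow> gdual n B \<subseteq> gdual n A"
  unfolding gdual_def by blast

lemma sub_ddual: assumes "D \<subseteq> gvecs n" shows "D \<subseteq> gdual n (gdual n D)"
proof
  fix d assume d: "d \<in> D"
  have "gdot n d c = 0" if c: "c \<in> gdual n D" for c
  proof -
    have "gdot n c d = 0" using c d unfolding gdual_def by blast
    then show ?thesis using gdot_comm[of n c d] by simp
  qed
  then show "d \<in> gdual n (gdual n D)" using d assms unfolding gdual_def[of n "gdual n D"] by blast
qed

lemma ddual:
  assumes D: "Bcode n D" shows "gdual n (gdual n D) = D"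
proof -
  have s: "D \<subseteq> gdual n (gdual n D)" using D sub_ddual unfolding Bcode_def by blast
  have a: "card D * card (gdual n D) = 2 ^ n" by (rule card_dual2[OF D])
  have b: "card (gdual n D) * card (gdual n (gdual n D)) = 2 ^ n" by (rule card_dual2[OF Bcode_gdual])
  have "card (gdual n D) > 0"
  proof -
    have "0 \<in> gdual n D" using Bcode_gdual unfolding Bcode_def by blast
    then show ?thesis using finite_gdual card_gt_0_iff by blast
  qed
  moreover have "card (gdual n D) * card (gdual n (gdual n D)) = card (gdual n D) * card D"
    using a b by (simp add: mult.commute)
  ultimately have "card (gdual n (gdual n D)) = card D" by simp
  then show ?thesis using card_subset_eq[OF finite_gdual s] by simp
qed

lemma exists_t:
  assumes D: "Bcode n D" and v: "v \<in> gvecs n" and nv: "v \<notin> D"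
  shows "\<exists>t\<in>gdual n D. gdot n t v = 1"
proof -
  have "v \<notin> gdual n (gdual n D)" using ddual[OF D] nv by simp
  then obtain t where t: "t \<in> gdual n D" "gdot n v t \<noteq> 0" using v unfolding gdual_def by blast
  then have "gdot n t v = 1" using gdot_comm[of n v t] ex2_ne0 by simp
  then show ?thesis using t(1) by blast
qed

definition good :: "nat \<Rightarrow> nat \<Rightarrow> (nat \<Rightarrow> 2) set \<Rightarrow> bool" where
  "good n k D \<longleftrightarrow> Bcode n D \<and> D \<subseteq> gdual n D \<and> (\<forall>d\<in>D. 4 dvd hamm n d) \<and> card D = 2 ^ k"

lemma hyperplane:
  assumes g: "good n (Suc k) D"
  shows "\<exists>D' v. good n k D' \<and> D' \<subseteq> D \<and> v \<in> D \<and> v \<notin> D' \<and> (\<forall>d\<in>D. d \<in> D' \<or> d + v \<in> D')"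
proof -
  have D: "Bcode n D" and so: "D \<subseteq> gdual n D" and de: "\<forall>d\<in>D. 4 dvd hamm n d"
    and cD: "card D = 2 ^ Suc k" using g unfolding good_def by auto
  have finD: "finite D" by (rule finite_Bcode[OF D])
  have z: "0 \<in> D" and cl: "\<And>x y. x \<in> D \<Longrightarrow> y \<in> D \<Longrightarrow> x + y \<in> D" and sub: "D \<subseteq> gvecs n"
    using D unfolding Bcode_def by auto
  have "\<not> D \<subseteq> {0}"
  proof
    assume "D \<subseteq> {0}"
    then have "card D \<le> 1" using card_mono[of "{0}" D] by simp
    moreover have "(1::nat) \<le> 2 ^ k" by simp
    ultimately show False using cD by simp
  qed
  then obtain v where v: "v \<in> D" "v \<noteq> 0" by blast
  then obtain j where j: "v j \<noteq> 0" by (auto simp: fun_eq_iff)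
  then have vj: "v j = 1" using ex2_ne0 by simp
  define D' where "D' = {d\<in>D. d j = 0}"
  have vD': "v \<notin> D'" using j unfolding D'_def by simp
  have split: "d \<in> D' \<or> d + v \<in> D'" if d: "d \<in> D" for d
  proof (cases "d j = 0")
    case True then show ?thesis using d unfolding D'_def by simp
  next
    case False
    then have "d j = 1" using ex2_ne0 by simp
    then have "(d + v) j = 0" using vj by simp
    then show ?thesis using cl[OF d v(1)] unfolding D'_def by simp
  qed
  have D'sub: "D' \<subseteq> D" unfolding D'_def by blast
  have BD': "Bcode n D'"
    unfolding Bcode_def D'_def using sub z cl by auto
  have "D = D' \<union> (\<lambda>d. d + v) ` D'"
  proof
    show "D \<subseteq> D' \<union> (\<lambda>d. d + v) ` D'"
    proof
      fix d assume d: "d \<in> D"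
      show "d \<in> D' \<union> (\<lambda>d. d + v) ` D'"
      proof (cases "d \<in> D'")
        case False
        then have "d + v \<in> D'" using split[OF d] by blast
        moreover have "d = (d + v) + v" using add_self2v[of v] by (simp add: add.assoc)
        ultimately show ?thesis by blast
      qed simp
    qed
    show "D' \<union> (\<lambda>d. d + v) ` D' \<subseteq> D" using D'sub cl v(1) by blast
  qed
  moreover have "D' \<inter> (\<lambda>d. d + v) ` D' = {}"
  proof -
    have "(d + v) j \<noteq> 0" if "d \<in> D'" for d using that vj unfolding D'_def by simp
    then show ?thesis unfolding D'_def by auto
  qed
  moreover have "card ((\<lambda>d. d + v) ` D') = card D'"
    by (rule card_image) (simp add: inj_on_def)
  moreover have "finite D'" using finite_subset[OF D'sub finD] .
  ultimately have "card D = card D' + card D'"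
    using card_Un_disjoint[of D' "(\<lambda>d. d + v) ` D'"] by simp
  then have cD': "card D' = 2 ^ k" using cD by simp
  have "good n k D'" unfolding good_def
    using BD' cD' de D'sub so gdual_anti[OF D'sub, of n] by blast
  then show ?thesis using D'sub v(1) vD' split by blast
qed


lemma smul_add_r: "smul r (x + y) = smul r x + smul r (y::nat \<Rightarrow> 'a::comm_ring_1)"
  by (simp add: smul_def fun_eq_iff distrib_left)
lemma smul_smul: "smul r (smul j w) = smul (r * j) (w::nat \<Rightarrow> 'a::comm_ring_1)"
  by (simp add: smul_def fun_eq_iff mult.assoc)
lemma smul_plus_sc: "smul j1 w + smul j2 w = smul (j1 + j2) (w::nat \<Rightarrow> 'a::comm_ring_1)"
  by (simp add: smul_def fun_eq_iff distrib_right)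
lemma smul_0[simp]: "smul 0 (w::nat \<Rightarrow> 'a::comm_ring_1) = 0" by (simp add: smul_def fun_eq_iff)
lemma smul_1[simp]: "smul 1 (w::nat \<Rightarrow> 'a::comm_ring_1) = w" by (simp add: smul_def)
lemma smul_twv: "smul r (twv t) = twv (smul (md r) t)"
  by (simp add: smul_def twv_def fun_eq_iff mult.commute[of r] tw_mult mult.commute[of "md r"])
lemma mdv_smul: "mdv (smul j w) = smul (md j) (mdv w)"
  by (simp add: smul_def mdv_def fun_eq_iff md_mult)
lemma gdot_smul_right: "gdot n x (smul r y) = r * gdot n x y"
  using gdot_smul[of n r y x] gdot_comm[of n x] by simp
lemma gdot_minus_right: "gdot n x (y - z) = gdot n x y - gdot n x z"
  using gdot_minus_left[of n y z x] gdot_comm[of n x] by simp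
lemma gdot_expand: "gdot n (a + b) (c + d) = gdot n a c + gdot n a d + gdot n b c + gdot n b d"
  by (simp add: gdot_add_left gdot_add_right add.assoc)
lemma tw_1: "tw 1 = 2" by (simp add: tw_def L_def)
lemma two_two4: "(2::4) + 2 = 0" by simp
lemma md_gdot0: "md a = 0 \<Longrightarrow> a \<noteq> 0 \<Longrightarrow> a = 2"
  using md_eq0_iff by blast

definition fib :: "nat \<Rightarrow> (nat \<Rightarrow> 2) set \<Rightarrow> (nat \<Rightarrow> 4) set set" where
  "fib n D = {C \<in> SD n. res C = D}"

definition Phi :: "nat \<Rightarrow> (nat \<Rightarrow> 2) set \<Rightarrow> (nat \<Rightarrow> 4) set \<Rightarrow> (nat \<Rightarrow> 4) set" where
  "Phi n D' C = {c + twv t | c t. c \<in> C \<and> mdv c \<in> D' \<and> t \<in> gdual n D'}"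

definition ext :: "nat \<Rightarrow> (nat \<Rightarrow> 4) set \<Rightarrow> (nat \<Rightarrow> 4) \<Rightarrow> (nat \<Rightarrow> 4) set" where
  "ext n C w = {c + smul j w | c j. c \<in> C \<and> gdot n c w = 0}"

lemma fibD: assumes "C \<in> fib n D"
  shows "C \<in> SD n" "Zcode n C" "res C = D" "C = gdual n C" "tor n C = gdual n D" "card C = 2 ^ n"
    "C \<subseteq> gvecs n"
  using assms SD_tor[of C n] SD_card[of C n] unfolding fib_def SD_def Zcode_def by auto

lemma SD_dot: "C \<in> SD n \<Longrightarrow> x \<in> C \<Longrightarrow> y \<in> C \<Longrightarrow> gdot n x y = 0"
  unfolding SD_def gdual_def by blast

lemma finite_fib: "finite (fib n D)"
proof -
  have "fib n D \<subseteq> Pow (gvecs n)" unfolding fib_def SD_def Zcode_def by blast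
  then show ?thesis using finite_subset finite_gvecs by blast
qed

locale step =
  fixes n k D D' v
  assumes gD: "good n (Suc k) D" and gD': "good n k D'" and sub: "D' \<subseteq> D"
    and vD: "v \<in> D" and vD': "v \<notin> D'" and split: "\<forall>d\<in>D. d \<in> D' \<or> d + v \<in> D'"
begin

lemma BD: "Bcode n D" and soD: "D \<subseteq> gdual n D" and deD: "\<forall>d\<in>D. 4 dvd hamm n d"
  and cD: "card D = 2 ^ Suc k" using gD unfolding good_def by auto
lemma BD': "Bcode n D'" and cD': "card D' = 2 ^ k" using gD' unfolding good_def by auto

lemma vvec: "v \<in> gvecs n" using BD vD unfolding Bcode_def by blast
lemma dual_sub: "gdual n D \<subseteq> gdual n D'" by (rule gdual_anti[OF sub])
lemma v_dual': "v \<in> gdual n D'" using soD vD dual_sub by blast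
lemma add_v: "d' \<in> D' \<Longrightarrow> d' + v \<in> D" using BD sub vD unfolding Bcode_def by blast
lemma dot_D: "d1 \<in> D \<Longrightarrow> d2 \<in> D \<Longrightarrow> gdot n d1 d2 = 0"
  using soD unfolding gdual_def by blast

lemma card_DD: "card D * card (gdual n D) = 2 ^ n" by (rule card_dual2[OF BD])
lemma card_DD': "card D' * card (gdual n D') = 2 ^ n" by (rule card_dual2[OF BD'])

lemma res_tor_ge:
  assumes X: "Zcode n X" and r: "A \<subseteq> res X" and t: "B \<subseteq> tor n X"
  shows "card A * card B \<le> card X"
proof -
  have "card A \<le> card (res X)" by (rule card_mono[OF finite_Bcode[OF Bcode_res[OF X]] r])
  moreover have "card B \<le> card (tor n X)" by (rule card_mono[OF finite_Bcode[OF Bcode_tor[OF X]] t])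
  ultimately have "card A * card B \<le> card (res X) * card (tor n X)" by (rule mult_le_mono)
  then show ?thesis using card_res_tor[OF X] by simp
qed

lemma Phi_fib:
  assumes C: "C \<in> fib n D"
  shows "Phi n D' C \<in> fib n D'"
proof -
  note Cf = fibD[OF C]
  have zC: "0 \<in> C" and aC: "\<And>x y. x \<in> C \<Longrightarrow> y \<in> C \<Longrightarrow> x + y \<in> C"
    and sC: "\<And>r x. x \<in> C \<Longrightarrow> smul r x \<in> C" using Cf(2) unfolding Zcode_def by auto
  have zD': "0 \<in> D'" and aD': "\<And>x y. x \<in> D' \<Longrightarrow> y \<in> D' \<Longrightarrow> x + y \<in> D'"
    using BD' unfolding Bcode_def by auto
  have zG: "0 \<in> gdual n D'" and aG: "\<And>x y. x \<in> gdual n D' \<Longrightarrow> y \<in> gdual n D' \<Longrightarrow> x + y \<in> gdual n D'"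
    and sG: "gdual n D' \<subseteq> gvecs n"
    using Bcode_gdual[of n D'] unfolding Bcode_def by auto
  let ?X = "Phi n D' C"
  have XZ: "Zcode n ?X" unfolding Zcode_def
  proof (intro conjI ballI allI)
    show "?X \<subseteq> gvecs n"
      unfolding Phi_def using Cf(7) sG gvecs_add gvecs_twv by blast
    have "(0::nat\<Rightarrow>4) = 0 + twv 0" by simp
    then show "0 \<in> ?X" unfolding Phi_def using zC zD' zG by force
  next
    fix x y assume x: "x \<in> ?X" and y: "y \<in> ?X"
    obtain c1 t1 where 1: "x = c1 + twv t1" "c1 \<in> C" "mdv c1 \<in> D'" "t1 \<in> gdual n D'"
      using x unfolding Phi_def by blast
    obtain c2 t2 where 2: "y = c2 + twv t2" "c2 \<in> C" "mdv c2 \<in> D'" "t2 \<in> gdual n D'"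
      using y unfolding Phi_def by blast
    have "x + y = (c1 + c2) + twv (t1 + t2)" using 1 2 by (simp add: twv_add add_ac)
    moreover have "mdv (c1 + c2) \<in> D'" using 1 2 aD' by (simp add: mdv_add)
    ultimately show "x + y \<in> ?X" unfolding Phi_def using 1 2 aC aG by blast
  next
    fix r and x assume x: "x \<in> ?X"
    obtain c t where 1: "x = c + twv t" "c \<in> C" "mdv c \<in> D'" "t \<in> gdual n D'"
      using x unfolding Phi_def by blast
    have "smul r x = smul r c + twv (smul (md r) t)" using 1 by (simp add: smul_add_r smul_twv)
    moreover have "mdv (smul r c) \<in> D'" using 1 Bcode_smul[OF BD'] by (simp add: mdv_smul)
    moreover have "smul (md r) t \<in> gdual n D'" using 1 Bcode_smul[OF Bcode_gdual] by blast
    ultimately show "smul r x \<in> ?X" unfolding Phi_def using 1 sC by blast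
  qed
  have XSO: "?X \<subseteq> gdual n ?X"
  proof
    fix x assume x: "x \<in> ?X"
    obtain c1 t1 where 1: "x = c1 + twv t1" "c1 \<in> C" "mdv c1 \<in> D'" "t1 \<in> gdual n D'"
      using x unfolding Phi_def by blast
    have "gdot n x y = 0" if y: "y \<in> ?X" for y
    proof -
      obtain c2 t2 where 2: "y = c2 + twv t2" "c2 \<in> C" "mdv c2 \<in> D'" "t2 \<in> gdual n D'"
        using y unfolding Phi_def by blast
      have a: "gdot n c1 c2 = 0" using SD_dot[OF Cf(1) 1(2) 2(2)] .
      have b: "gdot n t2 (mdv c1) = 0" using 2(4) 1(3) unfolding gdual_def by blast
      have c: "gdot n t1 (mdv c2) = 0" using 1(4) 2(3) unfolding gdual_def by blast
      have "gdot n x y = gdot n c1 c2 + gdot n c1 (twv t2) + gdot n (twv t1) c2 + gdot n (twv t1) (twv t2)"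
        using 1 2 by (simp only: gdot_expand)
      also have "\<dots> = 0" using a b c by (simp only: gdot_twv gdot_twv_right mdv_twv gdot_0_right tw_0 add_0)
      finally show ?thesis .
    qed
    moreover have "x \<in> gvecs n" using x XZ unfolding Zcode_def by blast
    ultimately show "x \<in> gdual n ?X" unfolding gdual_def by blast
  qed
  have r1: "D' \<subseteq> res ?X"
  proof
    fix d assume d: "d \<in> D'"
    then have "d \<in> res C" using sub Cf(3) by blast
    then obtain c where c: "c \<in> C" "mdv c = d" unfolding res_def by blast
    have "c = c + twv 0" by simp
    then have "c \<in> ?X" unfolding Phi_def using c d zG by blast
    then show "d \<in> res ?X" using c unfolding res_def by blast
  qed
  have r2: "res ?X \<subseteq> D'"
  proof
    fix d assume "d \<in> res ?X"
    then obtain x where x: "x \<in> ?X" "d = mdv x" unfolding res_def by blast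
    then obtain c t where 1: "x = c + twv t" "mdv c \<in> D'" unfolding Phi_def by blast
    then show "d \<in> D'" using x by (simp add: mdv_add)
  qed
  have t1: "gdual n D' \<subseteq> tor n ?X"
  proof
    fix t assume t: "t \<in> gdual n D'"
    have "twv t = 0 + twv t" by simp
    then have "twv t \<in> ?X" unfolding Phi_def using zC zD' t by force
    then show "t \<in> tor n ?X" using t sG unfolding tor_def by blast
  qed
  have "2 ^ n \<le> card ?X" using res_tor_ge[OF XZ r1 t1] card_DD' by simp
  then have "?X \<in> SD n" using SD_from[OF XZ XSO] by blast
  then show ?thesis unfolding fib_def using r1 r2 by blast
qed

lemma ext_fib:
  assumes C: "C \<in> fib n D'" and w: "w \<in> gvecs n" and mw: "mdv w = v"
  shows "ext n C w \<in> fib n D"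
proof -
  note Cf = fibD[OF C]
  have zC: "0 \<in> C" and aC: "\<And>x y. x \<in> C \<Longrightarrow> y \<in> C \<Longrightarrow> x + y \<in> C"
    and sC: "\<And>r x. x \<in> C \<Longrightarrow> smul r x \<in> C" using Cf(2) unfolding Zcode_def by auto
  let ?X = "ext n C w"
  have ww: "gdot n w w = 0"
  proof -
    have "gdot n w w = of_nat (card {i. i < n \<and> mdv w i \<noteq> 0})" by (rule gdot_self)
    also have "\<dots> = of_nat (hamm n v)" unfolding hamm_def mw ..
    also have "\<dots> = 0" using deD vD of_nat4_0 by blast
    finally show ?thesis .
  qed
  have XZ: "Zcode n ?X" unfolding Zcode_def
  proof (intro conjI ballI allI)
    show "?X \<subseteq> gvecs n"
      unfolding ext_def using Cf(7) w gvecs_add gvecs_smul by blast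
    have "(0::nat\<Rightarrow>4) = 0 + smul 0 w" by simp
    then show "0 \<in> ?X" unfolding ext_def using zC gdot_0_left[of n w] by blast
  next
    fix x y assume x: "x \<in> ?X" and y: "y \<in> ?X"
    obtain c1 j1 where 1: "x = c1 + smul j1 w" "c1 \<in> C" "gdot n c1 w = 0"
      using x unfolding ext_def by blast
    obtain c2 j2 where 2: "y = c2 + smul j2 w" "c2 \<in> C" "gdot n c2 w = 0"
      using y unfolding ext_def by blast
    have "x + y = (c1 + c2) + smul (j1 + j2) w" using 1 2 by (simp add: smul_plus_sc[symmetric] add_ac)
    moreover have "gdot n (c1 + c2) w = 0" using 1 2 by (simp add: gdot_add_left)
    ultimately show "x + y \<in> ?X" unfolding ext_def using 1 2 aC by blast
  next
    fix r and x assume x: "x \<in> ?X"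
    obtain c j where 1: "x = c + smul j w" "c \<in> C" "gdot n c w = 0"
      using x unfolding ext_def by blast
    have "smul r x = smul r c + smul (r * j) w" using 1 by (simp add: smul_add_r smul_smul)
    moreover have "gdot n (smul r c) w = 0" using 1 by (simp add: gdot_smul)
    ultimately show "smul r x \<in> ?X" unfolding ext_def using 1 sC by blast
  qed
  have XSO: "?X \<subseteq> gdual n ?X"
  proof
    fix x assume x: "x \<in> ?X"
    obtain c1 j1 where 1: "x = c1 + smul j1 w" "c1 \<in> C" "gdot n c1 w = 0"
      using x unfolding ext_def by blast
    have "gdot n x y = 0" if y: "y \<in> ?X" for y
    proof -
      obtain c2 j2 where 2: "y = c2 + smul j2 w" "c2 \<in> C" "gdot n c2 w = 0"
        using y unfolding ext_def by blast
      have a: "gdot n c1 c2 = 0" using SD_dot[OF Cf(1) 1(2) 2(2)] .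
      have b: "gdot n w c2 = 0" using 2(3) gdot_comm[of n w c2] by simp
      have "gdot n x y = gdot n c1 c2 + gdot n c1 (smul j2 w) + gdot n (smul j1 w) c2 + gdot n (smul j1 w) (smul j2 w)"
        using 1 2 by (simp only: gdot_expand)
      also have "\<dots> = 0" using a b 1(3) ww
        by (simp only: gdot_smul gdot_smul_right mult_zero_right add_0)
      finally show ?thesis .
    qed
    moreover have "x \<in> gvecs n" using x XZ unfolding Zcode_def by blast
    ultimately show "x \<in> gdual n ?X" unfolding gdual_def by blast
  qed
  have A: "\<exists>c\<in>C. gdot n c w = 0 \<and> mdv c = d'" if d': "d' \<in> D'" for d'
  proof -
    obtain c0 where c0: "c0 \<in> C" "mdv c0 = d'" using d' Cf(3) unfolding res_def by blast
    have "md (gdot n c0 w) = gdot n d' v" using c0 mw by (simp add: md_gdot)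
    also have "\<dots> = 0" using dot_D[of d' v] d' sub vD by blast
    finally have m0: "md (gdot n c0 w) = 0" .
    show ?thesis
    proof (cases "gdot n c0 w = 0")
      case True then show ?thesis using c0 by blast
    next
      case False
      then have g2: "gdot n c0 w = 2" using md_gdot0[OF m0] by blast
      obtain t where t: "t \<in> gdual n D'" "gdot n t v = 1" using exists_t[OF BD' vvec vD'] by blast
      have "twv t \<in> C" using t(1) Cf(5) unfolding tor_def by blast
      then have cC: "c0 + twv t \<in> C" using aC c0(1) by blast
      have "gdot n (c0 + twv t) w = gdot n c0 w + tw (gdot n t (mdv w))"
        by (simp only: gdot_add_left gdot_twv)
      also have "\<dots> = 0" using g2 t(2) mw tw_1 by simp
      finally have "gdot n (c0 + twv t) w = 0" .
      moreover have "mdv (c0 + twv t) = d'" using c0 by (simp add: mdv_add)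
      ultimately show ?thesis using cC by blast
    qed
  qed
  have r1: "D \<subseteq> res ?X"
  proof
    fix d assume d: "d \<in> D"
    show "d \<in> res ?X"
    proof (cases "d \<in> D'")
      case True
      then obtain c where c: "c \<in> C" "gdot n c w = 0" "mdv c = d" using A by blast
      have "c = c + smul 0 w" by simp
      then have "c \<in> ?X" unfolding ext_def using c by blast
      then show ?thesis using c unfolding res_def by blast
    next
      case False
      then have "d + v \<in> D'" using split d by blast
      then obtain c where c: "c \<in> C" "gdot n c w = 0" "mdv c = d + v" using A by blast
      have "c + smul 1 w \<in> ?X" unfolding ext_def using c by blast
      moreover have "mdv (c + smul 1 w) = d"
        using c mw add_self2v[of v] by (simp add: mdv_add add.assoc)
      ultimately show ?thesis unfolding res_def by (metis image_eqI)
    qed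
  qed
  have r2: "res ?X \<subseteq> D"
  proof
    fix d assume "d \<in> res ?X"
    then obtain x where x: "x \<in> ?X" "d = mdv x" unfolding res_def by blast
    then obtain c j where 1: "x = c + smul j w" "c \<in> C" unfolding ext_def by blast
    have mc: "mdv c \<in> D'" using 1(2) Cf(3) unfolding res_def by blast
    have "d = mdv c + smul (md j) v" using x 1 mw by (simp add: mdv_add mdv_smul)
    moreover have "mdv c + smul (md j) v \<in> D"
      using ex2[of "md j"] mc sub add_v by auto
    ultimately show "d \<in> D" by simp
  qed
  have t1: "gdual n D \<subseteq> tor n ?X"
  proof
    fix t assume t: "t \<in> gdual n D"
    have "twv t \<in> C" using t dual_sub Cf(5) unfolding tor_def by blast
    moreover have "gdot n (twv t) w = 0"
    proof -
      have "gdot n t v = 0" using t vD unfolding gdual_def by blast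
      then show ?thesis using mw by (simp add: gdot_twv)
    qed
    moreover have "twv t = twv t + smul 0 w" by simp
    ultimately have "twv t \<in> ?X" unfolding ext_def by blast
    moreover have "t \<in> gvecs n" using t unfolding gdual_def by blast
    ultimately show "t \<in> tor n ?X" unfolding tor_def by blast
  qed
  have "2 ^ n \<le> card ?X" using res_tor_ge[OF XZ r1 t1] card_DD by simp
  then have "?X \<in> SD n" using SD_from[OF XZ XSO] by blast
  then show ?thesis unfolding fib_def using r1 r2 by blast
qed

lemma Phi_ext:
  assumes C: "C \<in> fib n D'" and w: "w \<in> gvecs n" and mw: "mdv w = v"
  shows "Phi n D' (ext n C w) = C"
proof -
  note Cf = fibD[OF C]
  have aC: "\<And>x y. x \<in> C \<Longrightarrow> y \<in> C \<Longrightarrow> x + y \<in> C" using Cf(2) unfolding Zcode_def by auto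
  have zC: "0 \<in> C" using Cf(2) unfolding Zcode_def by auto
  have X: "ext n C w \<in> fib n D" by (rule ext_fib[OF C w mw])
  have Y: "Phi n D' (ext n C w) \<in> fib n D'" by (rule Phi_fib[OF X])
  have "Phi n D' (ext n C w) \<subseteq> C"
  proof
    fix y assume "y \<in> Phi n D' (ext n C w)"
    then obtain x t where xt: "y = x + twv t" "x \<in> ext n C w" "mdv x \<in> D'" "t \<in> gdual n D'"
      unfolding Phi_def by blast
    then obtain c j where cj: "x = c + smul j w" "c \<in> C" unfolding ext_def by blast
    have mc: "mdv c \<in> D'" using cj(2) Cf(3) unfolding res_def by blast
    have mx: "mdv x = mdv c + smul (md j) v" using cj mw by (simp add: mdv_add mdv_smul)
    have "md j = 0"
    proof (rule ccontr)
      assume "md j \<noteq> 0"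
      then have "md j = 1" using ex2_ne0 by blast
      then have "mdv x = mdv c + v" using mx by simp
      then have "v = mdv x + mdv c" using add_self2v[of "mdv c"] by (simp add: add_ac)
      then have "v \<in> D'" using xt(3) mc BD' unfolding Bcode_def by simp
      then show False using vD' by blast
    qed
    then have "j = 0 \<or> j = 2" using md_eq0_iff by blast
    moreover have "smul 2 w \<in> C"
    proof -
      have "smul 2 w = twv v" using smul2[of w] mw by simp
      moreover have "v \<in> tor n C" using v_dual' Cf(5) by blast
      ultimately show ?thesis unfolding tor_def by simp
    qed
    ultimately have "smul j w \<in> C" using zC by auto
    then have "x \<in> C" using cj aC by blast
    moreover have "twv t \<in> C" using xt(4) Cf(5) unfolding tor_def by blast
    ultimately show "y \<in> C" using xt(1) aC by blast
  qed
  moreover have "card (Phi n D' (ext n C w)) = card C" using fibD(6)[OF Y] Cf(6) by simp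
  ultimately show ?thesis using card_subset_eq[OF finite_Zcode[OF Cf(2)]] by blast
qed

lemma ext_Phi:
  assumes C: "C \<in> fib n D" and wC: "w \<in> C" and mw: "mdv w = v"
  shows "ext n (Phi n D' C) w = C"
proof -
  note Cf = fibD[OF C]
  have aC: "\<And>x y. x \<in> C \<Longrightarrow> y \<in> C \<Longrightarrow> x + y \<in> C"
    and sC: "\<And>r x. x \<in> C \<Longrightarrow> smul r x \<in> C" using Cf(2) unfolding Zcode_def by auto
  have Y: "Phi n D' C \<in> fib n D'" by (rule Phi_fib[OF C])
  note Yf = fibD[OF Y]
  have w: "w \<in> gvecs n" using wC Cf(7) by blast
  have X: "ext n (Phi n D' C) w \<in> fib n D" by (rule ext_fib[OF Y w mw])
  have inPhi: "c \<in> Phi n D' C" if "c \<in> C" "mdv c \<in> D'" for c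
  proof -
    have "c = c + twv 0" by simp
    moreover have "(0::nat\<Rightarrow>2) \<in> gdual n D'" using Bcode_gdual[of n D'] unfolding Bcode_def by blast
    ultimately show ?thesis unfolding Phi_def using that by blast
  qed
  have "ext n (Phi n D' C) w \<subseteq> C"
  proof
    fix x assume "x \<in> ext n (Phi n D' C) w"
    then obtain y j where yj: "x = y + smul j w" "y \<in> Phi n D' C" "gdot n y w = 0"
      unfolding ext_def by blast
    have "gdot n y c = 0" if c: "c \<in> C" for c
    proof -
      have "mdv c \<in> D" using c Cf(3) unfolding res_def by blast
      then consider "mdv c \<in> D'" | "mdv c + v \<in> D'" using split by blast
      then show ?thesis
      proof cases
        case 1
        show ?thesis by (rule SD_dot[OF Yf(1) yj(2) inPhi[OF c 1]])
      next
        case 2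
        have cw: "c - w \<in> C" using Zcode_minus[OF Cf(2) c wC] .
        have "mdv (c - w) = mdv c + v" using mw by (simp only: mdv_minus)
        then have "c - w \<in> Phi n D' C" using inPhi[OF cw] 2 by simp
        then have "gdot n y (c - w) = 0" using SD_dot[OF Yf(1) yj(2)] by blast
        then show ?thesis using yj(3) by (simp add: gdot_minus_right)
      qed
    qed
    moreover have "y \<in> gvecs n" using yj(2) Yf(7) by blast
    ultimately have "y \<in> gdual n C" unfolding gdual_def by blast
    then have "y \<in> C" using Cf(4) by simp
    then show "x \<in> C" using yj(1) aC sC wC by blast
  qed
  moreover have "card (ext n (Phi n D' C) w) = card C" using fibD(6)[OF X] Cf(6) by simp
  ultimately show ?thesis using card_subset_eq[OF finite_Zcode[OF Cf(2)]] by blast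
qed

end

lemma Zcode_all: "Zcode n (gvecs n)"
  unfolding Zcode_def using gvecs_0 gvecs_add gvecs_smul by blast

lemma tor_all: "tor n (gvecs n) = gvecs n"
  unfolding tor_def using gvecs_twv by blast

lemma card_lifts: assumes v: "v \<in> gvecs n" shows "card {w \<in> gvecs n. mdv w = v} = 2 ^ n"
proof -
  have "card {w \<in> gvecs n. mdv w = mdv (Lv v)} = card (tor n (gvecs n))"
    by (rule fib_card[OF Zcode_all gvecs_Lv[OF v]])
  then show ?thesis using tor_all card_gvecs[where 'a=2] by simp
qed

context step begin

lemma count: "card (fib n D') * 2 ^ n = card (fib n D) * card (gdual n D)"
proof -
  define W where "W = {w \<in> gvecs n. mdv w = v}"
  define P where "P = fib n D' \<times> W"
  define g where "g = (\<lambda>p. ext n (fst p) (snd p))"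
  have finW: "finite W" unfolding W_def by (rule finite_subset[OF _ finite_gvecs[of n]]) blast
  have finP: "finite P" unfolding P_def using finite_fib finW by simp
  have cP: "card P = card (fib n D') * 2 ^ n"
    unfolding P_def W_def using card_lifts[OF vvec] by (simp add: card_cartesian_product)
  have gP: "g p \<in> fib n D" if "p \<in> P" for p
    using that ext_fib unfolding P_def W_def g_def by auto
  have "P = (\<Union>C\<in>fib n D. {p\<in>P. g p = C})" using gP by blast
  then have "card P = card (\<Union>C\<in>fib n D. {p\<in>P. g p = C})" by simp
  also have "\<dots> = (\<Sum>C\<in>fib n D. card {p\<in>P. g p = C})"
    by (rule card_UN_disjoint) (use finite_fib finP in auto)
  also have "\<dots> = (\<Sum>C\<in>fib n D. card (gdual n D))"
  proof (rule sum.cong)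
    fix C assume C: "C \<in> fib n D"
    note Cf = fibD[OF C]
    let ?S = "{p\<in>P. g p = C}"
    let ?V = "{c\<in>C. mdv c = v}"
    have "bij_betw snd ?S ?V"
    proof (rule bij_betw_imageI)
      show "inj_on snd ?S"
      proof (rule inj_onI)
        fix p q assume p: "p \<in> ?S" and q: "q \<in> ?S" and e: "snd p = snd q"
        have "fst p = Phi n D' C"
          using p Phi_ext[of "fst p" "snd p"] unfolding P_def W_def g_def by (auto simp: mem_Times_iff)
        moreover have "fst q = Phi n D' C"
          using q Phi_ext[of "fst q" "snd q"] unfolding P_def W_def g_def by (auto simp: mem_Times_iff)
        ultimately show "p = q" using e by (simp add: prod_eq_iff)
      qed
      show "snd ` ?S = ?V"
      proof
        show "snd ` ?S \<subseteq> ?V"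
        proof
          fix w assume "w \<in> snd ` ?S"
          then obtain C' where pp: "(C', w) \<in> P" "ext n C' w = C" unfolding g_def by force
          have C': "C' \<in> fib n D'" and mw: "mdv w = v" using pp(1) unfolding P_def W_def by auto
          have "0 \<in> C'" using fibD(2)[OF C'] unfolding Zcode_def by blast
          moreover have "w = 0 + smul 1 w" by simp
          ultimately have "w \<in> ext n C' w" unfolding ext_def using gdot_0_left[of n w] by blast
          then show "w \<in> ?V" using pp(2) mw by blast
        qed
        show "?V \<subseteq> snd ` ?S"
        proof
          fix w assume w: "w \<in> ?V"
          have "(Phi n D' C, w) \<in> P" unfolding P_def W_def using Phi_fib[OF C] w Cf(7) by blast
          moreover have "g (Phi n D' C, w) = C" unfolding g_def using ext_Phi[OF C] w by simp
          ultimately show "w \<in> snd ` ?S" by force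
        qed
      qed
    qed
    then have "card ?S = card ?V" by (rule bij_betw_same_card)
    also have "\<dots> = card (tor n C)"
    proof -
      obtain c0 where c0: "c0 \<in> C" "mdv c0 = v" using vD Cf(3) unfolding res_def by blast
      show ?thesis using fib_card[OF Cf(2) c0(1)] c0(2) by simp
    qed
    finally show "card ?S = card (gdual n D)" using Cf(5) by simp
  qed simp
  finally show ?thesis using cP by simp
qed

end

lemma fib_base:
  assumes g: "good n 0 D"
  shows "card (fib n D) = 1"
proof -
  have D: "Bcode n D" and cD: "card D = 1" using g unfolding good_def by auto
  have "0 \<in> D" using D unfolding Bcode_def by blast
  then have D0: "D = {0}" using cD card_1_singletonE by (metis singletonD)
  define C0 where "C0 = twv ` gvecs n"
  have Z: "Zcode n C0" unfolding Zcode_def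
  proof (intro conjI ballI allI)
    show "C0 \<subseteq> gvecs n" unfolding C0_def using gvecs_twv by blast
    show "0 \<in> C0" unfolding C0_def using gvecs_0 twv_0 by (metis image_eqI)
  next
    fix x y assume "x \<in> C0" "y \<in> C0"
    then obtain a b where "a \<in> gvecs n" "b \<in> gvecs n" "x = twv a" "y = twv b" unfolding C0_def by blast
    then show "x + y \<in> C0" unfolding C0_def using gvecs_add twv_add by (metis image_eqI)
  next
    fix r x assume "x \<in> C0"
    then obtain a where "a \<in> gvecs n" "x = twv a" unfolding C0_def by blast
    then show "smul r x \<in> C0" unfolding C0_def using gvecs_smul smul_twv by (metis image_eqI)
  qed
  have SO: "C0 \<subseteq> gdual n C0"
  proof
    fix x assume x: "x \<in> C0"
    then obtain a where a: "x = twv a" unfolding C0_def by blast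
    have "gdot n x y = 0" if y: "y \<in> C0" for y
    proof -
      obtain b where "y = twv b" using y unfolding C0_def by blast
      then show ?thesis using a by (simp add: gdot_twv)
    qed
    then show "x \<in> gdual n C0" using x Z unfolding gdual_def Zcode_def by blast
  qed
  have cC0: "card C0 = 2 ^ n"
  proof -
    have "inj_on twv (gvecs n)" by (simp add: inj_on_def twv_inj)
    then have "card C0 = card (gvecs n :: (nat \<Rightarrow> 2) set)" unfolding C0_def by (rule card_image)
    then show ?thesis using card_gvecs[where 'a=2] by simp
  qed
  have SD0: "C0 \<in> SD n" using SD_from[OF Z SO] cC0 by simp
  have rC0: "res C0 = {0}"
  proof -
    have "C0 \<noteq> {}" using Z unfolding Zcode_def by blast
    moreover have "\<forall>x\<in>C0. mdv x = 0" unfolding C0_def by simp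
    ultimately show ?thesis unfolding res_def by auto
  qed
  have "fib n D = {C0}"
  proof
    show "{C0} \<subseteq> fib n D" unfolding fib_def using SD0 rC0 D0 by simp
    show "fib n D \<subseteq> {C0}"
    proof
      fix C assume C: "C \<in> fib n D"
      note Cf = fibD[OF C]
      have "C \<subseteq> C0"
      proof
        fix c assume c: "c \<in> C"
        then have "mdv c = 0" using Cf(3) D0 unfolding res_def by blast
        then have "c = twv (hfv c)" by (rule mdv0_twv)
        moreover have "hfv c \<in> gvecs n" using c Cf(7) gvecs_hfv by blast
        ultimately show "c \<in> C0" unfolding C0_def by blast
      qed
      then have "C = C0" using card_subset_eq[OF finite_Zcode[OF Z]] Cf(6) cC0 by simp
      then show "C \<in> {C0}" by simp
    qed
  qed
  then show ?thesis by simp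
qed

lemma fib_count: "good n k D \<Longrightarrow> card (fib n D) = 2 ^ (k * (k + 1) div 2)"
proof (induction k arbitrary: D)
  case 0
  then show ?case using fib_base by simp
next
  case (Suc k)
  obtain D' v where h: "good n k D'" "D' \<subseteq> D" "v \<in> D" "v \<notin> D'" "\<forall>d\<in>D. d \<in> D' \<or> d + v \<in> D'"
    using hyperplane[OF Suc.prems] by blast
  interpret step n k D D' v using Suc.prems h by unfold_locales auto
  have IH: "card (fib n D') = 2 ^ (k * (k + 1) div 2)" by (rule Suc.IH[OF h(1)])
  have G: "card (gdual n D) > 0"
  proof -
    have "0 \<in> gdual n D" using Bcode_gdual[of n D] unfolding Bcode_def by blast
    then show ?thesis using finite_gdual card_gt_0_iff by blast
  qed
  have "card (fib n D) * card (gdual n D) = 2 ^ (k * (k + 1) div 2) * (2 ^ Suc k * card (gdual n D))"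
    using count IH card_DD cD by simp
  then have "card (fib n D) = 2 ^ (k * (k + 1) div 2) * 2 ^ Suc k" using G by simp
  also have "\<dots> = 2 ^ (k * (k + 1) div 2 + Suc k)" by (simp add: power_add)
  also have "k * (k + 1) div 2 + Suc k = Suc k * (Suc k + 1) div 2"
  proof -
    have "Suc k * (Suc k + 1) = k * (k + 1) + 2 * Suc k" by (simp add: algebra_simps)
    then show ?thesis by simp
  qed
  finally show ?case .
qed


lemma good_iff: "good n k D \<longleftrightarrow> bin_nk_code n k D \<and> bin_self_orthogonal n D \<and> doubly_even n D"
proof -
  have bv: "Bvecs n = gvecs n" unfolding Bvecs_def gvecs_def ..
  have z: "(\<lambda>i. 0::2) = 0" by (simp add: fun_eq_iff)
  have p: "\<And>x y :: nat \<Rightarrow> 2. (\<lambda>i. x i + y i) = x + y" by (simp add: fun_eq_iff)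
  have bl: "bin_linear_code n D \<longleftrightarrow> Bcode n D"
    unfolding bin_linear_code_def Bcode_def bv z p ..
  have so: "D \<subseteq> gvecs n \<Longrightarrow> bin_self_orthogonal n D \<longleftrightarrow> D \<subseteq> gdual n D"
    unfolding bin_self_orthogonal_def gdual_def gdot_def by blast
  have de: "doubly_even n D \<longleftrightarrow> (\<forall>d\<in>D. 4 dvd hamm n d)"
    unfolding doubly_even_def hamming_wt_def hamm_def ..
  show ?thesis unfolding good_def bin_nk_code_def bl de
    using so unfolding Bcode_def by blast
qed

lemma nu_eq: "nu n k = card {D. good n k D}"
  unfolding nu_def good_iff ..

lemma finite_good: "finite {D. good n k D}"
proof -
  have "{D. good n k D} \<subseteq> Pow (gvecs n)" unfolding good_def Bcode_def by blast
  then show ?thesis using finite_subset finite_gvecs by blast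
qed

lemma fib_SD: "fib n D \<subseteq> SD n" unfolding fib_def by blast

lemma SD_count: "card (SD n) = (\<Sum>k = 0..n div 2. nu n k * 2 ^ (k * (k + 1) div 2))"
proof -
  define G where "G k = {D. good n k D}" for k
  define A where "A k = (\<Union>D\<in>G k. fib n D)" for k
  have SDeq: "SD n = (\<Union>k\<in>{0..n div 2}. A k)"
  proof
    show "SD n \<subseteq> (\<Union>k\<in>{0..n div 2}. A k)"
    proof
      fix C assume C: "C \<in> SD n"
      obtain k where k: "card (res C) = 2 ^ k" "k \<le> n div 2" using SD_res_card[OF C] by blast
      have Z: "Zcode n C" and so: "C \<subseteq> gdual n C" using C unfolding SD_def by auto
      have "good n k (res C)" unfolding good_def
        using Bcode_res[OF Z] so_res[OF Z so] so_de[OF Z so] k(1) by blast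
      moreover have "C \<in> fib n (res C)" unfolding fib_def using C by blast
      ultimately show "C \<in> (\<Union>k\<in>{0..n div 2}. A k)" unfolding A_def G_def using k(2) by auto
    qed
    show "(\<Union>k\<in>{0..n div 2}. A k) \<subseteq> SD n" unfolding A_def using fib_SD by blast
  qed
  have finA: "finite (A k)" for k
    unfolding A_def G_def using finite_good finite_fib by blast
  have "card (SD n) = (\<Sum>k\<in>{0..n div 2}. card (A k))"
    unfolding SDeq
  proof (rule card_UN_disjoint)
    show "\<forall>i\<in>{0..n div 2}. \<forall>j\<in>{0..n div 2}. i \<noteq> j \<longrightarrow> A (i::nat) \<inter> A (j::nat) = {}"
    proof (intro ballI impI)
      fix i j :: nat assume "i \<noteq> j"
      show "A i \<inter> A j = {}"
      proof (rule ccontr)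
        assume "A i \<inter> A j \<noteq> {}"
        then obtain C D1 D2 where "D1 \<in> G i" "D2 \<in> G j" "C \<in> fib n D1" "C \<in> fib n D2"
          unfolding A_def by blast
        then have "D1 = D2" "card D1 = 2 ^ i" "card D2 = 2 ^ j"
          unfolding fib_def G_def good_def by auto
        then have "(2::nat) ^ i = 2 ^ j" by simp
        then show False using \<open>i \<noteq> j\<close> by simp
      qed
    qed
  qed (use finA in auto)
  also have "\<dots> = (\<Sum>k\<in>{0..n div 2}. nu n k * 2 ^ (k * (k + 1) div 2))"
  proof (rule sum.cong)
    fix k assume "k \<in> {0..n div 2}"
    have "card (A k) = (\<Sum>D\<in>G k. card (fib n D))"
      unfolding A_def
    proof (rule card_UN_disjoint)
      show "finite (G k)" unfolding G_def by (rule finite_good)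
      show "\<forall>i\<in>G k. finite (fib n i)" using finite_fib by blast
      show "\<forall>i\<in>G k. \<forall>j\<in>G k. i \<noteq> j \<longrightarrow> fib n i \<inter> fib n j = {}"
        unfolding fib_def by blast
    qed
    also have "\<dots> = (\<Sum>D\<in>G k. 2 ^ (k * (k + 1) div 2))"
      by (rule sum.cong) (auto simp: G_def fib_count)
    also have "\<dots> = nu n k * 2 ^ (k * (k + 1) div 2)"
      unfolding nu_eq G_def by simp
    finally show "card (A k) = nu n k * 2 ^ (k * (k + 1) div 2)" .
  qed simp
  finally show ?thesis .
qed


definition p1 :: "ring_R \<Rightarrow> 4" where "p1 r = fst r + snd r"

lemma rmul_0: "rmul r 0 = 0" by (simp add: rmul_def zero_prod_def)
lemma fst_rmul: "fst (rmul a b) = fst a * fst b" by (simp add: rmul_def)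
lemma p1_rmul: "p1 (rmul a b) = p1 a * p1 b"
  by (simp add: rmul_def p1_def algebra_simps)
lemma p1_add: "p1 (a + b) = p1 a + p1 b" by (simp add: p1_def algebra_simps)
lemma p1_0[simp]: "p1 0 = 0" by (simp add: p1_def)
lemma R_eqI: "fst a = fst b \<Longrightarrow> p1 a = p1 b \<Longrightarrow> a = (b::ring_R)"
  by (simp add: p1_def prod_eq_iff)
lemma R_eq0: "(a::ring_R) = 0 \<longleftrightarrow> fst a = 0 \<and> p1 a = 0"
  using R_eqI[of a 0] by auto

definition P0 :: "(nat \<Rightarrow> ring_R) \<Rightarrow> (nat \<Rightarrow> 4)" where "P0 x = (\<lambda>i. fst (x i))"
definition P1 :: "(nat \<Rightarrow> ring_R) \<Rightarrow> (nat \<Rightarrow> 4)" where "P1 x = (\<lambda>i. p1 (x i))"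
definition emb :: "(nat \<Rightarrow> 4) \<Rightarrow> (nat \<Rightarrow> 4) \<Rightarrow> (nat \<Rightarrow> ring_R)" where
  "emb a b = (\<lambda>i. (a i, b i - a i))"

lemma P0_emb[simp]: "P0 (emb a b) = a" by (simp add: P0_def emb_def)
lemma P1_emb[simp]: "P1 (emb a b) = b" by (simp add: P1_def emb_def p1_def)
lemma vec_eqI: "P0 x = P0 y \<Longrightarrow> P1 x = P1 y \<Longrightarrow> x = y"
  by (auto simp: P0_def P1_def fun_eq_iff intro: R_eqI)

lemma fst_sum: "fst (sum f A) = (\<Sum>a\<in>A. fst (f a))"
  by (induction A rule: infinite_finite_induct) simp_all
lemma p1_sum: "p1 (sum f A) = (\<Sum>a\<in>A. p1 (f a))"
  by (induction A rule: infinite_finite_induct) (simp_all add: p1_add)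

lemma Rip_P0: "fst (Rip n x y) = gdot n (P0 x) (P0 y)"
  by (simp add: Rip_def gdot_def P0_def fst_sum fst_rmul)
lemma Rip_P1: "p1 (Rip n x y) = gdot n (P1 x) (P1 y)"
  by (simp add: Rip_def gdot_def P1_def p1_sum p1_rmul)
lemma Rip_0: "Rip n x y = 0 \<longleftrightarrow> gdot n (P0 x) (P0 y) = 0 \<and> gdot n (P1 x) (P1 y) = 0"
  using R_eq0[of "Rip n x y"] Rip_P0 Rip_P1 by simp

lemma Rvecs_P0: "x \<in> Rvecs n \<Longrightarrow> P0 x \<in> gvecs n" by (simp add: Rvecs_def gvecs_def P0_def)
lemma Rvecs_P1: "x \<in> Rvecs n \<Longrightarrow> P1 x \<in> gvecs n" by (simp add: Rvecs_def gvecs_def P1_def)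
lemma Rvecs_emb: "a \<in> gvecs n \<Longrightarrow> b \<in> gvecs n \<Longrightarrow> emb a b \<in> Rvecs n"
  by (simp add: Rvecs_def gvecs_def emb_def zero_prod_def)

lemma P0_add: "P0 (\<lambda>i. x i + y i) = P0 x + P0 y" by (simp add: P0_def fun_eq_iff)
lemma P1_add: "P1 (\<lambda>i. x i + y i) = P1 x + P1 y" by (simp add: P1_def fun_eq_iff p1_add)
lemma P0_rmul: "P0 (\<lambda>i. rmul r (x i)) = smul (fst r) (P0 x)" by (simp add: P0_def smul_def fst_rmul)
lemma P1_rmul: "P1 (\<lambda>i. rmul r (x i)) = smul (p1 r) (P1 x)" by (simp add: P1_def smul_def p1_rmul)
lemma P0_zero: "P0 (\<lambda>i. 0) = 0" by (simp add: P0_def fun_eq_iff)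
lemma P1_zero: "P1 (\<lambda>i. 0) = 0" by (simp add: P1_def fun_eq_iff)

lemma fst_e: "fst ((1, 3) :: ring_R) = 1" "p1 ((1, 3) :: ring_R) = 0"
  "fst ((0, 1) :: ring_R) = 0" "p1 ((0, 1) :: ring_R) = 1"
  by (simp_all add: p1_def)

lemma Rlin_mix:
  assumes C: "R_linear_code n C" and x: "x \<in> C" and y: "y \<in> C"
  shows "\<exists>z\<in>C. P0 z = P0 x \<and> P1 z = P1 y"
proof -
  define z where "z = (\<lambda>i. rmul (1,3) (x i) + rmul (0,1) (y i))"
  have rm: "\<And>r x. x \<in> C \<Longrightarrow> (\<lambda>i. rmul r (x i)) \<in> C"
    and ad: "\<And>x y. x \<in> C \<Longrightarrow> y \<in> C \<Longrightarrow> (\<lambda>i. x i + y i) \<in> C"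
    using C unfolding R_linear_code_def by blast+
  have "z \<in> C" unfolding z_def by (rule ad[OF rm[OF x] rm[OF y]])
  moreover have "P0 z = P0 x"
  proof -
    have "P0 z = smul (fst ((1,3)::ring_R)) (P0 x) + smul (fst ((0,1)::ring_R)) (P0 y)"
      unfolding z_def P0_add P0_rmul ..
    then show ?thesis by (simp only: fst_e smul_1 smul_0 add_0_right)
  qed
  moreover have "P1 z = P1 y"
  proof -
    have "P1 z = smul (p1 ((1,3)::ring_R)) (P1 x) + smul (p1 ((0,1)::ring_R)) (P1 y)"
      unfolding z_def P1_add P1_rmul ..
    then show ?thesis by (simp only: fst_e smul_1 smul_0 add_0_left)
  qed
  ultimately show ?thesis by blast
qed

definition RF :: "(nat \<Rightarrow> ring_R) set \<Rightarrow> (nat \<Rightarrow> 4) set \<times> (nat \<Rightarrow> 4) set" where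
  "RF C = (P0 ` C, P1 ` C)"
definition RG :: "nat \<Rightarrow> (nat \<Rightarrow> 4) set \<times> (nat \<Rightarrow> 4) set \<Rightarrow> (nat \<Rightarrow> ring_R) set" where
  "RG n AB = {x \<in> Rvecs n. P0 x \<in> fst AB \<and> P1 x \<in> snd AB}"

lemma Rlin_D: assumes "R_linear_code n C"
  shows "C \<subseteq> Rvecs n" "(\<lambda>i. 0) \<in> C" "\<And>x y. x \<in> C \<Longrightarrow> y \<in> C \<Longrightarrow> (\<lambda>i. x i + y i) \<in> C"
    "\<And>r x. x \<in> C \<Longrightarrow> (\<lambda>i. rmul r (x i)) \<in> C"
  using assms unfolding R_linear_code_def by blast+

lemma RSD_D: assumes "C \<in> R_self_dual_codes n"
  shows "R_linear_code n C" "C = R_dual n C" "C \<subseteq> Rvecs n"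
  using assms unfolding R_self_dual_codes_def R_linear_code_def by auto

lemma RSD_dot: "C \<in> R_self_dual_codes n \<Longrightarrow> x \<in> C \<Longrightarrow> y \<in> C \<Longrightarrow> Rip n x y = 0"
  using RSD_D(2)[of C n] unfolding R_dual_def by blast

lemma GF: assumes C: "C \<in> R_self_dual_codes n" shows "RG n (RF C) = C"
proof
  show "C \<subseteq> RG n (RF C)" unfolding RG_def RF_def using RSD_D(3)[OF C] by auto
  show "RG n (RF C) \<subseteq> C"
  proof
    fix x assume "x \<in> RG n (RF C)"
    then obtain a b where ab: "a \<in> C" "b \<in> C" "P0 x = P0 a" "P1 x = P1 b"
      unfolding RG_def RF_def by auto
    obtain z where "z \<in> C" "P0 z = P0 a" "P1 z = P1 b" using Rlin_mix[OF RSD_D(1)[OF C] ab(1,2)] by blast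
    then have "x = z" using ab vec_eqI by metis
    then show "x \<in> C" using \<open>z \<in> C\<close> by simp
  qed
qed

lemma F_SD0: assumes C: "C \<in> R_self_dual_codes n" shows "P0 ` C \<in> SD n"
proof -
  note L = RSD_D[OF C]
  have Z: "Zcode n (P0 ` C)" unfolding Zcode_def
  proof (intro conjI ballI allI)
    show "P0 ` C \<subseteq> gvecs n" using L(3) Rvecs_P0 by blast
    have "P0 (\<lambda>i. 0) \<in> P0 ` C" using Rlin_D(2)[OF L(1)] by (rule imageI)
    then show "0 \<in> P0 ` C" by (simp only: P0_zero)
  next
    fix a b assume "a \<in> P0 ` C" "b \<in> P0 ` C"
    then obtain x y where xy: "x \<in> C" "y \<in> C" "a = P0 x" "b = P0 y" by blast
    have "P0 (\<lambda>i. x i + y i) \<in> P0 ` C" using Rlin_D(3)[OF L(1) xy(1,2)] by (rule imageI)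
    then show "a + b \<in> P0 ` C" unfolding xy(3,4) P0_add .
  next
    fix r a assume "a \<in> P0 ` C"
    then obtain x where x: "x \<in> C" "a = P0 x" by blast
    have "P0 (\<lambda>i. rmul (r, 0) (x i)) \<in> P0 ` C" using Rlin_D(4)[OF L(1) x(1)] by (rule imageI)
    moreover have "fst ((r, 0)::ring_R) = r" by (simp add: p1_def)
    ultimately show "smul r a \<in> P0 ` C" unfolding x(2) P0_rmul by simp
  qed
  have "P0 ` C = gdual n (P0 ` C)"
  proof
    show "P0 ` C \<subseteq> gdual n (P0 ` C)"
    proof
      fix a assume "a \<in> P0 ` C"
      then obtain x where x: "x \<in> C" "a = P0 x" by blast
      have "gdot n a b = 0" if "b \<in> P0 ` C" for b
      proof -
        obtain y where "y \<in> C" "b = P0 y" using \<open>b \<in> P0 ` C\<close> by blast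
        then show ?thesis using x RSD_dot[OF C x(1)] Rip_0 by blast
      qed
      moreover have "a \<in> gvecs n" using x L(3) Rvecs_P0 by blast
      ultimately show "a \<in> gdual n (P0 ` C)" unfolding gdual_def by blast
    qed
    show "gdual n (P0 ` C) \<subseteq> P0 ` C"
    proof
      fix z assume z: "z \<in> gdual n (P0 ` C)"
      then have zv: "z \<in> gvecs n" unfolding gdual_def by blast
      have "emb z 0 \<in> Rvecs n" using Rvecs_emb[OF zv gvecs_0] .
      moreover have "Rip n (emb z 0) c = 0" if c: "c \<in> C" for c
      proof -
        have "gdot n z (P0 c) = 0" using z c unfolding gdual_def by blast
        then show ?thesis unfolding Rip_0 by simp
      qed
      ultimately have "emb z 0 \<in> R_dual n C" unfolding R_dual_def by blast
      then have "emb z 0 \<in> C" using L(2) by simp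
      then show "z \<in> P0 ` C" by (metis P0_emb image_eqI)
    qed
  qed
  then show ?thesis unfolding SD_def using Z by blast
qed

lemma F_SD1: assumes C: "C \<in> R_self_dual_codes n" shows "P1 ` C \<in> SD n"
proof -
  note L = RSD_D[OF C]
  have Z: "Zcode n (P1 ` C)" unfolding Zcode_def
  proof (intro conjI ballI allI)
    show "P1 ` C \<subseteq> gvecs n" using L(3) Rvecs_P1 by blast
    have "P1 (\<lambda>i. 0) \<in> P1 ` C" using Rlin_D(2)[OF L(1)] by (rule imageI)
    then show "0 \<in> P1 ` C" by (simp only: P1_zero)
  next
    fix a b assume "a \<in> P1 ` C" "b \<in> P1 ` C"
    then obtain x y where xy: "x \<in> C" "y \<in> C" "a = P1 x" "b = P1 y" by blast
    have "P1 (\<lambda>i. x i + y i) \<in> P1 ` C" using Rlin_D(3)[OF L(1) xy(1,2)] by (rule imageI)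
    then show "a + b \<in> P1 ` C" unfolding xy(3,4) P1_add .
  next
    fix r a assume "a \<in> P1 ` C"
    then obtain x where x: "x \<in> C" "a = P1 x" by blast
    have "P1 (\<lambda>i. rmul (r, 0) (x i)) \<in> P1 ` C" using Rlin_D(4)[OF L(1) x(1)] by (rule imageI)
    moreover have "p1 ((r, 0)::ring_R) = r" by (simp add: p1_def)
    ultimately show "smul r a \<in> P1 ` C" unfolding x(2) P1_rmul by simp
  qed
  have "P1 ` C = gdual n (P1 ` C)"
  proof
    show "P1 ` C \<subseteq> gdual n (P1 ` C)"
    proof
      fix a assume "a \<in> P1 ` C"
      then obtain x where x: "x \<in> C" "a = P1 x" by blast
      have "gdot n a b = 0" if "b \<in> P1 ` C" for b
      proof -
        obtain y where "y \<in> C" "b = P1 y" using \<open>b \<in> P1 ` C\<close> by blast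
        then show ?thesis using x RSD_dot[OF C x(1)] Rip_0 by blast
      qed
      moreover have "a \<in> gvecs n" using x L(3) Rvecs_P1 by blast
      ultimately show "a \<in> gdual n (P1 ` C)" unfolding gdual_def by blast
    qed
    show "gdual n (P1 ` C) \<subseteq> P1 ` C"
    proof
      fix z assume z: "z \<in> gdual n (P1 ` C)"
      then have zv: "z \<in> gvecs n" unfolding gdual_def by blast
      have "emb 0 z \<in> Rvecs n" using Rvecs_emb[OF gvecs_0 zv] .
      moreover have "Rip n (emb 0 z) c = 0" if c: "c \<in> C" for c
      proof -
        have "gdot n z (P1 c) = 0" using z c unfolding gdual_def by blast
        then show ?thesis unfolding Rip_0 by simp
      qed
      ultimately have "emb 0 z \<in> R_dual n C" unfolding R_dual_def by blast
      then have "emb 0 z \<in> C" using L(2) by simp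
      then show "z \<in> P1 ` C" by (metis P1_emb image_eqI)
    qed
  qed
  then show ?thesis unfolding SD_def using Z by blast
qed

lemma G_RSD: assumes A: "A \<in> SD n" and B: "B \<in> SD n" shows "RG n (A, B) \<in> R_self_dual_codes n"
proof -
  have ZA: "Zcode n A" and ZB: "Zcode n B" using A B unfolding SD_def by auto
  let ?C = "RG n (A, B)"
  have lin: "R_linear_code n ?C" unfolding R_linear_code_def
  proof (intro conjI ballI allI)
    show "?C \<subseteq> Rvecs n" unfolding RG_def by blast
    show "(\<lambda>i. 0) \<in> ?C" unfolding RG_def using ZA ZB
      by (simp add: P0_zero P1_zero Zcode_def Rvecs_def)
  next
    fix x y assume "x \<in> ?C" "y \<in> ?C"
    then show "(\<lambda>i. x i + y i) \<in> ?C" unfolding RG_def using ZA ZB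
      by (simp add: P0_add P1_add Zcode_def Rvecs_def)
  next
    fix r x assume "x \<in> ?C"
    then have x: "x \<in> Rvecs n" "P0 x \<in> A" "P1 x \<in> B" unfolding RG_def by auto
    have "(\<lambda>i. rmul r (x i)) \<in> Rvecs n" using x(1) unfolding Rvecs_def by (simp add: rmul_0)
    moreover have "P0 (\<lambda>i. rmul r (x i)) \<in> A" unfolding P0_rmul using x(2) ZA unfolding Zcode_def by blast
    moreover have "P1 (\<lambda>i. rmul r (x i)) \<in> B" unfolding P1_rmul using x(3) ZB unfolding Zcode_def by blast
    ultimately show "(\<lambda>i. rmul r (x i)) \<in> ?C" unfolding RG_def by simp
  qed
  have "?C = R_dual n ?C"
  proof
    show "?C \<subseteq> R_dual n ?C"
    proof
      fix x assume x: "x \<in> ?C"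
      have "Rip n x c = 0" if c: "c \<in> ?C" for c
        using x c SD_dot[OF A] SD_dot[OF B] unfolding RG_def Rip_0 by auto
      then show "x \<in> R_dual n ?C" using x unfolding R_dual_def RG_def by blast
    qed
    show "R_dual n ?C \<subseteq> ?C"
    proof
      fix x assume x: "x \<in> R_dual n ?C"
      then have xv: "x \<in> Rvecs n" and o: "\<And>c. c \<in> ?C \<Longrightarrow> Rip n x c = 0"
        unfolding R_dual_def by auto
      have "P0 x \<in> gdual n A"
      proof -
        have "gdot n (P0 x) a = 0" if a: "a \<in> A" for a
        proof -
          have "a \<in> gvecs n" using a ZA unfolding Zcode_def by blast
          then have "emb a 0 \<in> Rvecs n" using Rvecs_emb gvecs_0 by blast
          then have "emb a 0 \<in> ?C" unfolding RG_def using a ZB unfolding Zcode_def by simp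
          then show ?thesis using o[of "emb a 0"] unfolding Rip_0 by simp
        qed
        then show ?thesis using Rvecs_P0[OF xv] unfolding gdual_def by blast
      qed
      moreover have "P1 x \<in> gdual n B"
      proof -
        have "gdot n (P1 x) b = 0" if b: "b \<in> B" for b
        proof -
          have "b \<in> gvecs n" using b ZB unfolding Zcode_def by blast
          then have "emb 0 b \<in> Rvecs n" using Rvecs_emb gvecs_0 by blast
          then have "emb 0 b \<in> ?C" unfolding RG_def using b ZA unfolding Zcode_def by simp
          then show ?thesis using o[of "emb 0 b"] unfolding Rip_0 by simp
        qed
        then show ?thesis using Rvecs_P1[OF xv] unfolding gdual_def by blast
      qed
      ultimately show "x \<in> ?C" using A B xv unfolding SD_def RG_def by auto
    qed
  qed
  then show ?thesis unfolding R_self_dual_codes_def using lin by blast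
qed

lemma FG: assumes A: "A \<in> SD n" and B: "B \<in> SD n" shows "RF (RG n (A, B)) = (A, B)"
proof -
  have ZA: "Zcode n A" and ZB: "Zcode n B" using A B unfolding SD_def by auto
  have "P0 ` RG n (A, B) = A"
  proof
    show "P0 ` RG n (A, B) \<subseteq> A" unfolding RG_def by auto
    show "A \<subseteq> P0 ` RG n (A, B)"
    proof
      fix a assume a: "a \<in> A"
      then have "a \<in> gvecs n" using ZA unfolding Zcode_def by blast
      then have "emb a 0 \<in> Rvecs n" using Rvecs_emb gvecs_0 by blast
      then have "emb a 0 \<in> RG n (A, B)" unfolding RG_def using a ZB unfolding Zcode_def by simp
      then show "a \<in> P0 ` RG n (A, B)" by (metis P0_emb image_eqI)
    qed
  qed
  moreover have "P1 ` RG n (A, B) = B"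
  proof
    show "P1 ` RG n (A, B) \<subseteq> B" unfolding RG_def by auto
    show "B \<subseteq> P1 ` RG n (A, B)"
    proof
      fix b assume b: "b \<in> B"
      then have "b \<in> gvecs n" using ZB unfolding Zcode_def by blast
      then have "emb 0 b \<in> Rvecs n" using Rvecs_emb gvecs_0 by blast
      then have "emb 0 b \<in> RG n (A, B)" unfolding RG_def using b ZA unfolding Zcode_def by simp
      then show "b \<in> P1 ` RG n (A, B)" by (metis P1_emb image_eqI)
    qed
  qed
  ultimately show ?thesis unfolding RF_def by simp
qed

lemma R_count: "card (R_self_dual_codes n) = card (SD n) ^ 2"
proof -
  have "bij_betw RF (R_self_dual_codes n) (SD n \<times> SD n)"
  proof (rule bij_betw_byWitness[where f' = "RG n"])
    show "\<forall>a\<in>R_self_dual_codes n. RG n (RF a) = a" using GF by blast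
    show "\<forall>a'\<in>SD n \<times> SD n. RF (RG n a') = a'" using FG by auto
    show "RF ` R_self_dual_codes n \<subseteq> SD n \<times> SD n" unfolding RF_def using F_SD0 F_SD1 by auto
    show "RG n ` (SD n \<times> SD n) \<subseteq> R_self_dual_codes n" using G_RSD by auto
  qed
  then have "card (R_self_dual_codes n) = card (SD n \<times> SD n)" by (rule bij_betw_same_card)
  then show ?thesis by (simp add: card_cartesian_product power2_eq_square)
qed

theorem theorem6:
  fixes n :: nat
  shows "card (R_self_dual_codes n) =
         (\<Sum>k = 0..n div 2. nu n k * 2 ^ (k * (k + 1) div 2)) ^ 2"
  using R_count SD_count by simp


end
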